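(* The pair $(M_{\psi_1},M_{\psi_2})$ on $H^2_{\mathbb D}(\ell^2(\mathbb Z))$ is jointly unitarily equivalent to $(\tau_1,\tau_2)$ on $H^2_{\mathbb D^2}$. In particular, $\sigma(M_{\psi_1},M_{\psi_2})=\overline{\mathbb D^2}$, and for every point $(\lambda_1,\lambda_2)\in\mathbb D^2$ the non-singularity of the Koszul complex of $(M_{\psi_1}-\lambda_1I,M_{\psi_2}-\lambda_2I)$ breaks at stage 2.
   Context: On $\ell^2(\mathbb Z)$ with standard basis $\{e_n\}$, $\omega e_n=e_{n+1}$ is the bilateral shift, $p_-$ the projection onto $\overline{\operatorname{span}}\{e_n:n<0\}$, $p_-^\perp=I-p_-$, $\psi_1(z)=\omega^*(p_-^\perp+zp_-)$, $\psi_2(z)=(p_-+zp_-^\perp)\omega$ for $z\in\mathbb D$; $M_{\psi_i}$ are the multiplication operators on the $\ell^2(\mathbb Z)$-valued Hardy space $H^2_{\mathbb D}(\ell^2(\mathbb Z))$ of the disc. $H^2_{\mathbb D^2}$ is the Hardy space of the bidisc with orthonormal basis $\{z_1^{m_1}z_2^{m_2}\}$; $U$ is the unitary on it with $U(z_1^{m_1}z_2^{m_2})=z_1^{m_1+2}z_2^{m_2}$ if $m_1\ge m_2$, $=z_1^{m_1+1}z_2^{m_2-1}$ if $m_1+1=m_2$, $=z_1^{m_1}z_2^{m_2-2}$ if $m_1+2\le m_2$; $\tau_1=U^*M_{z_1}$, $\tau_2=M_{z_2}U$. Koszul complex of commuting $T_1,T_2$: $0\xrightarrow{\delta_0}\mathcal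 H\xrightarrow{\delta_1}\mathcal H\oplus\mathcal H\xrightarrow{\delta_2}\mathcal H\xrightarrow{\delta_3}0$, $\delta_1h=(T_1h,T_2h)$, $\delta_2(h_1,h_2)=T_1h_2-T_2h_1$; $\sigma$ is the Taylor joint spectrum; breaking at stage $n$ means $\operatorname{ran}\delta_{n-1}\neq\ker\delta_n$. *)

theory Defs
  imports "HOL-Analysis.Analysis" "HOL-Library.Function_Algebras"
begin

text \<open>Vectors of l2(Z) are functions int => complex; e_n is the indicator of n.\<close>

definition l2Z :: "(int \<Rightarrow> complex) set" where
  "l2Z = {x. (\<lambda>n. (cmod (x n))\<^sup>2) summable_on UNIV}"

definition l2Z_norm :: "(int \<Rightarrow> complex) \<Rightarrow> real" where
  "l2Z_norm x = sqrt (\<Sum>\<^sub>\<infinity>n. (cmod (x n))\<^sup>2)"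

text \<open>The l2(Z)-valued Hardy space of the disc, identified (as usual) with the
  sequences of Taylor coefficients: f(z) = sum_k z^k a_k with a_k in l2(Z) and
  sum_k norm(a_k)^2 finite.\<close>

definition H2D_l2Z :: "(nat \<Rightarrow> int \<Rightarrow> complex) set" where
  "H2D_l2Z = {a. (\<forall>k. a k \<in> l2Z) \<and> (\<lambda>k. (l2Z_norm (a k))\<^sup>2) summable_on UNIV}"

definition H2D_norm :: "(nat \<Rightarrow> int \<Rightarrow> complex) \<Rightarrow> real" where
  "H2D_norm a = sqrt (\<Sum>\<^sub>\<infinity>k. (l2Z_norm (a k))\<^sup>2)"

text \<open>The Hardy space of the bidisc, identified with the coefficients w.r.t. the
  orthonormal basis z1^m1 z2^m2.\<close>

definition H2D2 :: "(nat \<times> nat \<Rightarrow> complex) set" where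
  "H2D2 = {f. (\<lambda>m. (cmod (f m))\<^sup>2) summable_on UNIV}"

definition H2D2_norm :: "(nat \<times> nat \<Rightarrow> complex) \<Rightarrow> real" where
  "H2D2_norm f = sqrt (\<Sum>\<^sub>\<infinity>m. (cmod (f m))\<^sup>2)"

text \<open>Bilateral shift: omega e_n = e_(n+1), i.e. (omega x)(n) = x(n-1).\<close>
definition omega :: "(int \<Rightarrow> complex) \<Rightarrow> (int \<Rightarrow> complex)" where
  "omega x = (\<lambda>n. x (n - 1))"

definition omega_adj :: "(int \<Rightarrow> complex) \<Rightarrow> (int \<Rightarrow> complex)" where
  "omega_adj x = (\<lambda>n. x (n + 1))"

definition p_minus :: "(int \<Rightarrow> complex) \<Rightarrow> (int \<Rightarrow> complex)" where
  "p_minus x = (\<lambda>n. if n < 0 then x n else 0)"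

definition p_perp :: "(int \<Rightarrow> complex) \<Rightarrow> (int \<Rightarrow> complex)" where
  "p_perp x = (\<lambda>n. x n - p_minus x n)"

text \<open>For an operator valued affine symbol psi(z) = A + z B, the multiplication
  operator M_psi acts on Taylor coefficients by
  (M_psi a)_k = A a_k + B a_(k-1)   (with a_(-1) = 0).\<close>
definition mult_affine ::
  "((int \<Rightarrow> complex) \<Rightarrow> (int \<Rightarrow> complex)) \<Rightarrow> ((int \<Rightarrow> complex) \<Rightarrow> (int \<Rightarrow> complex))
    \<Rightarrow> (nat \<Rightarrow> int \<Rightarrow> complex) \<Rightarrow> (nat \<Rightarrow> int \<Rightarrow> complex)" where
  "mult_affine A B a = (\<lambda>k n. A (a k) n + (if k = 0 then 0 else B (a (k - 1)) n))"

text \<open>psi_1(z) = omega*(p_perp + z p_-) = omega* p_perp + z omega* p_-.\<close>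
definition M_psi1 :: "(nat \<Rightarrow> int \<Rightarrow> complex) \<Rightarrow> (nat \<Rightarrow> int \<Rightarrow> complex)" where
  "M_psi1 = mult_affine (omega_adj \<circ> p_perp) (omega_adj \<circ> p_minus)"

text \<open>psi_2(z) = (p_- + z p_perp) omega = p_- omega + z p_perp omega.\<close>
definition M_psi2 :: "(nat \<Rightarrow> int \<Rightarrow> complex) \<Rightarrow> (nat \<Rightarrow> int \<Rightarrow> complex)" where
  "M_psi2 = mult_affine (p_minus \<circ> omega) (p_perp \<circ> omega)"

definition M_z1 :: "(nat \<times> nat \<Rightarrow> complex) \<Rightarrow> (nat \<times> nat \<Rightarrow> complex)" where
  "M_z1 f = (\<lambda>(m1, m2). if m1 = 0 then 0 else f (m1 - 1, m2))"

definition M_z2 :: "(nat \<times> nat \<Rightarrow> complex) \<Rightarrow> (nat \<times> nat \<Rightarrow> complex)" where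
  "M_z2 f = (\<lambda>(m1, m2). if m2 = 0 then 0 else f (m1, m2 - 1))"

text \<open>Action of U on the basis indices: U(z1^m1 z2^m2) = z1^(fst s) z2^(snd s),
  s = U_idx (m1, m2).\<close>
definition U_idx :: "nat \<times> nat \<Rightarrow> nat \<times> nat" where
  "U_idx = (\<lambda>(m1, m2).
     if m1 \<ge> m2 then (m1 + 2, m2)
     else if m1 + 1 = m2 then (m1 + 1, m2 - 1)
     else (m1, m2 - 2))"

text \<open>U is the linear extension of its action on the basis:
  U(sum_m f(m) e_m) = sum_m f(m) e_(U_idx m), so the coefficient at n is the
  sum of f(m) over m with U_idx m = n.  Its adjoint has coefficients
  (U* f)(m) = <f, U e_m> = f(U_idx m).\<close>
definition U_op :: "(nat \<times> nat \<Rightarrow> complex) \<Rightarrow> (nat \<times> nat \<Rightarrow> complex)" where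
  "U_op f = (\<lambda>n. sum f {m. U_idx m = n})"

definition U_adj :: "(nat \<times> nat \<Rightarrow> complex) \<Rightarrow> (nat \<times> nat \<Rightarrow> complex)" where
  "U_adj f = f \<circ> U_idx"

definition tau1 :: "(nat \<times> nat \<Rightarrow> complex) \<Rightarrow> (nat \<times> nat \<Rightarrow> complex)" where
  "tau1 = U_adj \<circ> M_z1"

definition tau2 :: "(nat \<times> nat \<Rightarrow> complex) \<Rightarrow> (nat \<times> nat \<Rightarrow> complex)" where
  "tau2 = M_z2 \<circ> U_op"

definition jointly_unitarily_equivalent ::
  "((nat \<Rightarrow> int \<Rightarrow> complex) \<Rightarrow> (nat \<Rightarrow> int \<Rightarrow> complex)) \<Rightarrow>
   ((nat \<Rightarrow> int \<Rightarrow> complex) \<Rightarrow> (nat \<Rightarrow> int \<Rightarrow> complex)) \<Rightarrow>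
   ((nat \<times> nat \<Rightarrow> complex) \<Rightarrow> (nat \<times> nat \<Rightarrow> complex)) \<Rightarrow>
   ((nat \<times> nat \<Rightarrow> complex) \<Rightarrow> (nat \<times> nat \<Rightarrow> complex)) \<Rightarrow> bool" where
  "jointly_unitarily_equivalent S1 S2 T1 T2 \<longleftrightarrow>
     (\<exists>W. bij_betw W H2D_l2Z H2D2 \<and>
          (\<forall>a\<in>H2D_l2Z. \<forall>b\<in>H2D_l2Z. \<forall>c d :: complex.
              W (\<lambda>k n. c * a k n + d * b k n) = (\<lambda>m. c * W a m + d * W b m)) \<and>
          (\<forall>a\<in>H2D_l2Z. H2D2_norm (W a) = H2D_norm a) \<and>
          (\<forall>a\<in>H2D_l2Z. W (S1 a) = T1 (W a) \<and> W (S2 a) = T2 (W a)))"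

text \<open>Koszul complex 0 -> H -> H x H -> H -> 0 of a commuting pair (T1,T2) on the
  space H (a subset of a vector space 'v, here spaces of functions with pointwise
  operations): delta1 h = (T1 h, T2 h), delta2 (h1,h2) = T1 h2 - T2 h1.
  Breaking at stage n (n = 1,2,3) means ran delta_(n-1) ~= ker delta_n.\<close>
definition koszul_breaks_at ::
  "('v::ab_group_add) set \<Rightarrow> ('v \<Rightarrow> 'v) \<Rightarrow> ('v \<Rightarrow> 'v) \<Rightarrow> nat \<Rightarrow> bool" where
  "koszul_breaks_at H T1 T2 n \<longleftrightarrow>
     (if n = 1 then {0} \<noteq> {h\<in>H. T1 h = 0 \<and> T2 h = 0}
      else if n = 2 then (\<lambda>h. (T1 h, T2 h)) ` H \<noteq>
             {(h1, h2). h1 \<in> H \<and> h2 \<in> H \<and> T1 h2 - T2 h1 = 0}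
      else if n = 3 then (\<lambda>(h1, h2). T1 h2 - T2 h1) ` (H \<times> H) \<noteq> H
      else False)"

definition op_minus_scalar ::
  "((nat \<Rightarrow> int \<Rightarrow> complex) \<Rightarrow> (nat \<Rightarrow> int \<Rightarrow> complex)) \<Rightarrow> complex
     \<Rightarrow> (nat \<Rightarrow> int \<Rightarrow> complex) \<Rightarrow> (nat \<Rightarrow> int \<Rightarrow> complex)" where
  "op_minus_scalar T l = (\<lambda>a k n. T a k n - l * a k n)"

definition taylor_spectrum ::
  "(nat \<Rightarrow> int \<Rightarrow> complex) set \<Rightarrow>
   ((nat \<Rightarrow> int \<Rightarrow> complex) \<Rightarrow> (nat \<Rightarrow> int \<Rightarrow> complex)) \<Rightarrow>
   ((nat \<Rightarrow> int \<Rightarrow> complex) \<Rightarrow> (nat \<Rightarrow> int \<Rightarrow> complex)) \<Rightarrow> (complex \<times> complex) set" where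
  "taylor_spectrum H T1 T2 =
     {(l1, l2). \<exists>n\<in>{1, 2, 3}.
        koszul_breaks_at H (op_minus_scalar T1 l1) (op_minus_scalar T2 l2) n}"

end

theory Submission
  imports Defs
begin

definition bfp :: "('i \<Rightarrow> complex) \<Rightarrow> bool" where
  "bfp x \<longleftrightarrow> (\<exists>B. \<forall>F. finite F \<longrightarrow> (\<Sum>i\<in>F. (cmod (x i))\<^sup>2) \<le> B)"

lemma bfp_iff_summable: "bfp x \<longleftrightarrow> (\<lambda>i. (cmod (x i))\<^sup>2) summable_on UNIV"
proof
  assume "bfp x"
  then obtain B where B: "\<And>F. finite F \<Longrightarrow> (\<Sum>i\<in>F. (cmod (x i))\<^sup>2) \<le> B" unfolding bfp_def by blast
  show "(\<lambda>i. (cmod (x i))\<^sup>2) summable_on UNIV"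
    by (rule nonneg_bdd_above_summable_on) (auto intro!: bdd_aboveI[where M=B] B)
next
  assume s: "(\<lambda>i. (cmod (x i))\<^sup>2) summable_on UNIV"
  show "bfp x" unfolding bfp_def
    by (rule exI[where x="\<Sum>\<^sub>\<infinity>i. (cmod (x i))\<^sup>2"]) (auto intro!: finite_sum_le_infsum s)
qed

lemma bfp_single: assumes "bfp x" shows "\<exists>B. \<forall>i. (cmod (x i))\<^sup>2 \<le> B"
proof -
  obtain B where B: "\<And>F. finite F \<Longrightarrow> (\<Sum>i\<in>F. (cmod (x i))\<^sup>2) \<le> B" using assms unfolding bfp_def by blast
  have "(cmod (x i))\<^sup>2 \<le> B" for i using B[of "{i}"] by simp
  thus ?thesis by blast
qed

lemma bfp_bounded: assumes "bfp x" shows "\<exists>M. \<forall>i. cmod (x i) \<le> M"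
proof -
  obtain B where B: "\<And>i. (cmod (x i))\<^sup>2 \<le> B" using bfp_single[OF assms] by blast
  have "cmod (x i) \<le> sqrt B" for i using B[of i] real_le_rsqrt by blast
  thus ?thesis by blast
qed

lemma bfp_zero: "bfp (\<lambda>i. 0)" unfolding bfp_def by auto

lemma sq2: "(u + v)\<^sup>2 \<le> 2 * u\<^sup>2 + 2 * (v::real)\<^sup>2"
proof -
  have "0 \<le> (u - v)\<^sup>2" by simp
  thus ?thesis by (simp add: power2_diff power2_sum)
qed

lemma bfp_lin: assumes "bfp x" "bfp y" shows "bfp (\<lambda>i. c * x i + d * y i)"
proof -
  obtain A where A: "\<And>F. finite F \<Longrightarrow> (\<Sum>i\<in>F. (cmod (x i))\<^sup>2) \<le> A" using assms(1) unfolding bfp_def by blast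
  obtain B where B: "\<And>F. finite F \<Longrightarrow> (\<Sum>i\<in>F. (cmod (y i))\<^sup>2) \<le> B" using assms(2) unfolding bfp_def by blast
  have pt: "(cmod (c * x i + d * y i))\<^sup>2 \<le> 2 * (cmod c)\<^sup>2 * (cmod (x i))\<^sup>2 + 2 * (cmod d)\<^sup>2 * (cmod (y i))\<^sup>2" for i
  proof -
    have "cmod (c * x i + d * y i) \<le> cmod c * cmod (x i) + cmod d * cmod (y i)"
      by (metis norm_mult norm_triangle_ineq)
    hence "(cmod (c * x i + d * y i))\<^sup>2 \<le> (cmod c * cmod (x i) + cmod d * cmod (y i))\<^sup>2"
      by (simp add: power_mono)
    also have "\<dots> \<le> 2 * (cmod c)\<^sup>2 * (cmod (x i))\<^sup>2 + 2 * (cmod d)\<^sup>2 * (cmod (y i))\<^sup>2"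
      using sq2[of "cmod c * cmod (x i)" "cmod d * cmod (y i)"] by (simp add: power_mult_distrib)
    finally show ?thesis .
  qed
  show ?thesis unfolding bfp_def
  proof (intro exI allI impI)
    fix F :: "'a set" assume F: "finite F"
    have "(\<Sum>i\<in>F. (cmod (c * x i + d * y i))\<^sup>2) \<le> (\<Sum>i\<in>F. 2 * (cmod c)\<^sup>2 * (cmod (x i))\<^sup>2 + 2 * (cmod d)\<^sup>2 * (cmod (y i))\<^sup>2)"
      by (rule sum_mono) (rule pt)
    also have "\<dots> = 2 * (cmod c)\<^sup>2 * (\<Sum>i\<in>F. (cmod (x i))\<^sup>2) + 2 * (cmod d)\<^sup>2 * (\<Sum>i\<in>F. (cmod (y i))\<^sup>2)"
      by (simp add: sum.distrib sum_distrib_left mult.assoc)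
    also have "\<dots> \<le> 2 * (cmod c)\<^sup>2 * A + 2 * (cmod d)\<^sup>2 * B"
      by (intro add_mono mult_left_mono A B F) auto
    finally show "(\<Sum>i\<in>F. (cmod (c * x i + d * y i))\<^sup>2) \<le> 2 * (cmod c)\<^sup>2 * A + 2 * (cmod d)\<^sup>2 * B" .
  qed
qed

lemma has_sum_finsum:
  fixes f :: "'k \<Rightarrow> 'a \<Rightarrow> real"
  assumes "finite K" "\<And>k. k \<in> K \<Longrightarrow> (f k has_sum s k) A"
  shows "((\<lambda>n. \<Sum>k\<in>K. f k n) has_sum (\<Sum>k\<in>K. s k)) A"
  using assms
proof (induction K rule: finite_induct)
  case empty thus ?case by (simp add: has_sum_0)
next
  case (insert x F) thus ?case by (simp add: has_sum_add)
qed

lemma infsum_finsum: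
  fixes f :: "'k \<Rightarrow> 'a \<Rightarrow> real"
  assumes "finite K" "\<And>k. k \<in> K \<Longrightarrow> f k summable_on A"
  shows "infsum (\<lambda>n. \<Sum>k\<in>K. f k n) A = (\<Sum>k\<in>K. infsum (f k) A)"
    and "(\<lambda>n. \<Sum>k\<in>K. f k n) summable_on A"
  using has_sum_finsum[OF assms(1), where f=f and s="\<lambda>k. infsum (f k) A" and A=A] assms(2)
  by (auto intro: infsumI simp: summable_on_def)

definition unc :: "(nat \<Rightarrow> int \<Rightarrow> complex) \<Rightarrow> nat \<times> int \<Rightarrow> complex" where
  "unc a = (\<lambda>(k, n). a k n)"

lemma l2Z_iff_bfp: "x \<in> l2Z \<longleftrightarrow> bfp x"
  by (simp add: l2Z_def bfp_iff_summable)

lemma H_iff_bfp: "a \<in> H2D_l2Z \<longleftrightarrow> bfp (unc a)"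
proof
  assume a: "a \<in> H2D_l2Z"
  hence rows: "\<And>k. (\<lambda>n. (cmod (a k n))\<^sup>2) summable_on UNIV" and
    S: "(\<lambda>k. (l2Z_norm (a k))\<^sup>2) summable_on UNIV"
    by (auto simp: H2D_l2Z_def l2Z_def)
  have nrm: "(l2Z_norm (a k))\<^sup>2 = (\<Sum>\<^sub>\<infinity>n. (cmod (a k n))\<^sup>2)" for k
    unfolding l2Z_norm_def by (simp add: infsum_nonneg)
  show "bfp (unc a)" unfolding bfp_def
  proof (intro exI allI impI)
    fix F :: "(nat \<times> int) set" assume F: "finite F"
    have "(\<Sum>i\<in>F. (cmod (unc a i))\<^sup>2) \<le> (\<Sum>i\<in>fst ` F \<times> snd ` F. (cmod (unc a i))\<^sup>2)"
      by (rule sum_mono2) (auto simp: F, (metis fst_conv snd_conv image_eqI)+)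
    also have "\<dots> = (\<Sum>k\<in>fst ` F. \<Sum>n\<in>snd ` F. (cmod (a k n))\<^sup>2)"
      by (simp add: sum.cartesian_product unc_def case_prod_beta)
    also have "\<dots> \<le> (\<Sum>k\<in>fst ` F. (l2Z_norm (a k))\<^sup>2)"
      unfolding nrm by (intro sum_mono finite_sum_le_infsum rows) (auto simp: F)
    also have "\<dots> \<le> (\<Sum>\<^sub>\<infinity>k. (l2Z_norm (a k))\<^sup>2)"
      by (intro finite_sum_le_infsum S) (auto simp: F)
    finally show "(\<Sum>i\<in>F. (cmod (unc a i))\<^sup>2) \<le> (\<Sum>\<^sub>\<infinity>k. (l2Z_norm (a k))\<^sup>2)" .
  qed
next
  assume b: "bfp (unc a)"
  then obtain B where B: "\<And>F. finite F \<Longrightarrow> (\<Sum>i\<in>F. (cmod (unc a i))\<^sup>2) \<le> B" unfolding bfp_def by blast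
  have rowB: "(\<Sum>k\<in>K. \<Sum>n\<in>G. (cmod (a k n))\<^sup>2) \<le> B" if "finite K" "finite G" for K G
    using B[of "K \<times> G"] that by (simp add: sum.cartesian_product unc_def case_prod_beta)
  have rows: "(\<lambda>n. (cmod (a k n))\<^sup>2) summable_on UNIV" for k
    by (rule nonneg_bdd_above_summable_on) (auto intro!: bdd_aboveI[where M=B] rowB[of "{k}", simplified])
  have nrm: "(l2Z_norm (a k))\<^sup>2 = (\<Sum>\<^sub>\<infinity>n. (cmod (a k n))\<^sup>2)" for k
    unfolding l2Z_norm_def by (simp add: infsum_nonneg)
  have "(\<lambda>k. (l2Z_norm (a k))\<^sup>2) summable_on UNIV"
  proof (rule nonneg_bdd_above_summable_on)
    show "bdd_above (sum (\<lambda>k. (l2Z_norm (a k))\<^sup>2) ` {F. F \<subseteq> UNIV \<and> finite F})"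
    proof (rule bdd_aboveI[where M=B], clarsimp)
      fix K :: "nat set" assume K: "finite K"
      have "(\<Sum>k\<in>K. (l2Z_norm (a k))\<^sup>2) = (\<Sum>\<^sub>\<infinity>n. \<Sum>k\<in>K. (cmod (a k n))\<^sup>2)"
        unfolding nrm by (rule infsum_finsum(1)[symmetric]) (auto intro: rows K)
      also have "\<dots> \<le> B"
      proof (rule infsum_le_finite_sums)
        show "(\<lambda>n. \<Sum>k\<in>K. (cmod (a k n))\<^sup>2) summable_on UNIV" by (intro infsum_finsum(2) rows K)
        fix G :: "int set" assume "finite G"
        hence "(\<Sum>k\<in>K. \<Sum>n\<in>G. (cmod (a k n))\<^sup>2) \<le> B" using rowB[OF K] by blast
        thus "(\<Sum>n\<in>G. \<Sum>k\<in>K. (cmod (a k n))\<^sup>2) \<le> B" by (subst sum.swap)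
      qed
      finally show "(\<Sum>k\<in>K. (l2Z_norm (a k))\<^sup>2) \<le> B" .
    qed
  qed auto
  thus "a \<in> H2D_l2Z" using rows by (auto simp: H2D_l2Z_def l2Z_def)
qed

definition Tp :: "('i \<Rightarrow> 'i option) \<Rightarrow> ('i \<Rightarrow> complex) \<Rightarrow> 'i \<Rightarrow> complex" where
  "Tp p x i = (case p i of None \<Rightarrow> 0 | Some j \<Rightarrow> x j)"

definition pinj :: "('i \<Rightarrow> 'i option) \<Rightarrow> bool" where
  "pinj p \<longleftrightarrow> (\<forall>i i' j. p i = Some j \<longrightarrow> p i' = Some j \<longrightarrow> i = i')"

lemma Tp_sum_le:
  assumes p: "pinj p" and z: "\<And>F. finite F \<Longrightarrow> (\<Sum>i\<in>F. (cmod (z i))\<^sup>2) \<le> B" and F: "finite F"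
  shows "(\<Sum>i\<in>F. (cmod (Tp p z i))\<^sup>2) \<le> B"
proof -
  let ?G = "{i\<in>F. p i \<noteq> None}"
  have "(\<Sum>i\<in>F. (cmod (Tp p z i))\<^sup>2) = (\<Sum>i\<in>?G. (cmod (Tp p z i))\<^sup>2)"
    by (rule sum.mono_neutral_right) (auto simp: F Tp_def)
  also have "\<dots> = (\<Sum>i\<in>?G. (cmod (z (the (p i))))\<^sup>2)"
    by (rule sum.cong) (auto simp: Tp_def)
  also have "\<dots> = (\<Sum>j\<in>(\<lambda>i. the (p i)) ` ?G. (cmod (z j))\<^sup>2)"
  proof (rule sum.reindex[symmetric, unfolded comp_def])
    show "inj_on (\<lambda>i. the (p i)) ?G"
      using p unfolding pinj_def inj_on_def by (metis (mono_tags, lifting) mem_Collect_eq option.collapse)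
  qed
  also have "\<dots> \<le> B" by (rule z) (simp add: F)
  finally show ?thesis .
qed

lemma bfp_Tp: assumes "pinj p" "bfp x" shows "bfp (Tp p x)"
  using assms Tp_sum_le unfolding bfp_def by metis

lemma Tp_minus_inj:
  assumes l: "1 < cmod l" and x: "bfp x" and e: "\<And>i. Tp p x i - l * x i = 0"
  shows "x i = 0"
proof -
  obtain M where M: "\<And>i. cmod (x i) \<le> M" using bfp_bounded[OF x] by blast
  have M0: "0 \<le> M" using M[of i] norm_ge_zero order_trans by blast
  have l0: "l \<noteq> 0" using l by auto
  have step: "cmod (x i) \<le> cmod (Tp p x i) / cmod l" for i
    using e[of i] l0 by (simp add: field_simps norm_mult)
  have bound: "\<And>i. cmod (x i) \<le> M * (1 / cmod l) ^ j" for j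
  proof (induction j)
    case 0 thus ?case using M by simp
  next
    case (Suc j)
    fix i
    have "cmod (Tp p x i) \<le> M * (1 / cmod l) ^ j"
      using Suc.IH by (auto simp: Tp_def M0 split: option.splits)
    hence "cmod (Tp p x i) / cmod l \<le> M * (1 / cmod l) ^ j / cmod l"
      using l by (simp add: divide_right_mono)
    thus "cmod (x i) \<le> M * (1 / cmod l) ^ Suc j" using step[of i] by (simp add: field_simps)
  qed
  have "(\<lambda>j. M * (1 / cmod l) ^ j) \<longlonglongrightarrow> M * 0"
    by (intro tendsto_mult tendsto_const LIMSEQ_power_zero) (use l in \<open>simp add: divide_less_eq\<close>)
  hence "cmod (x i) \<le> 0" by (intro LIMSEQ_le_const[where X="\<lambda>j. M * (1 / cmod l) ^ j"]) (auto intro: bound)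
  thus ?thesis by simp
qed

lemma series_CS:
  fixes c w :: "nat \<Rightarrow> real"
  assumes c0: "\<And>j. 0 \<le> c j" and sc: "summable c" and s1: "summable (\<lambda>j. c j * w j)"
    and s2: "summable (\<lambda>j. c j * (w j)\<^sup>2)"
  shows "(\<Sum>j. c j * w j)\<^sup>2 \<le> (\<Sum>j. c j) * (\<Sum>j. c j * (w j)\<^sup>2)"
proof (rule LIMSEQ_le_const2)
  show "(\<lambda>n. (\<Sum>j<n. c j * w j)\<^sup>2) \<longlonglongrightarrow> (\<Sum>j. c j * w j)\<^sup>2"
    by (intro tendsto_power summable_LIMSEQ s1)
  show "\<exists>N. \<forall>n\<ge>N. (\<Sum>j<n. c j * w j)\<^sup>2 \<le> (\<Sum>j. c j) * (\<Sum>j. c j * (w j)\<^sup>2)"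
  proof (intro exI allI impI)
    fix n :: nat
    have "(\<Sum>j<n. c j * w j)\<^sup>2 = (\<Sum>j<n. sqrt (c j) * (sqrt (c j) * w j))\<^sup>2"
      by (intro arg_cong[where f="\<lambda>t. t\<^sup>2"] sum.cong) (auto simp: c0 real_sqrt_mult_self mult.assoc[symmetric])
    also have "\<dots> \<le> (\<Sum>j<n. (sqrt (c j))\<^sup>2) * (\<Sum>j<n. (sqrt (c j) * w j)\<^sup>2)"
      by (rule Cauchy_Schwarz_ineq_sum)
    also have "\<dots> = (\<Sum>j<n. c j) * (\<Sum>j<n. c j * (w j)\<^sup>2)"
      by (simp add: c0 power_mult_distrib)
    also have "\<dots> \<le> (\<Sum>j. c j) * (\<Sum>j. c j * (w j)\<^sup>2)"
      by (intro mult_mono sum_le_suminf sc s2 sum_nonneg suminf_nonneg) (auto simp: c0)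
    finally show "(\<Sum>j<n. c j * w j)\<^sup>2 \<le> (\<Sum>j. c j) * (\<Sum>j. c j * (w j)\<^sup>2)" .
  qed
qed

lemma Tp_minus_surj:
  assumes p: "pinj p" and l: "1 < cmod l" and y: "bfp y"
  shows "\<exists>x. bfp x \<and> (\<lambda>i. Tp p x i - l * x i) = y"
proof -
  obtain B where B: "\<And>F. finite F \<Longrightarrow> (\<Sum>i\<in>F. (cmod (y i))\<^sup>2) \<le> B" using y unfolding bfp_def by blast
  define Y where "Y j = (Tp p ^^ j) y" for j
  have Ysum: "\<And>F. finite F \<Longrightarrow> (\<Sum>i\<in>F. (cmod (Y j i))\<^sup>2) \<le> B" for j
  proof (induction j)
    case 0 thus ?case using B by (simp add: Y_def)
  next
    case (Suc j) thus ?case unfolding Y_def using Tp_sum_le[OF p] by simp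
  qed
  have B0: "0 \<le> B" using B[of "{}"] by simp
  have Ybd: "cmod (Y j i) \<le> sqrt B" for j i
    using Ysum[of "{i}" j] by (simp add: real_le_rsqrt)
  have YS: "Y (Suc j) i = (case p i of None \<Rightarrow> 0 | Some i' \<Rightarrow> Y j i')" for j i
    unfolding Y_def by (simp add: Tp_def)
  define r where "r = 1 / cmod l"
  have r0: "0 < r" and r1: "r < 1" using l by (auto simp: r_def divide_less_eq)
  define m where "m = 1 / l"
  have m: "cmod m = r" by (simp add: m_def r_def norm_divide)
  have lm: "l * m = 1" using l by (auto simp: m_def)
  have sr: "summable (\<lambda>j. r ^ Suc j)" using r0 r1 by (simp add: summable_geometric)
  have sumT: "summable (\<lambda>j. m ^ Suc j * Y j i)" for i
  proof (rule summable_comparison_test'[where g="\<lambda>j. r ^ Suc j * sqrt B" and N=0])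
    show "summable (\<lambda>j. r ^ Suc j * sqrt B)" by (intro summable_mult2 sr)
    fix j show "norm (m ^ Suc j * Y j i) \<le> r ^ Suc j * sqrt B"
      by (simp add: norm_mult norm_power m del: power_Suc) (intro mult_left_mono Ybd, use r0 in auto)
  qed
  define x where "x i = - (\<Sum>j. m ^ Suc j * Y j i)" for i
  have eq: "Tp p x i - l * x i = y i" for i
  proof -
    have T: "Tp p x i = - (\<Sum>j. m ^ Suc j * Y (Suc j) i)"
      by (cases "p i") (simp_all add: Tp_def x_def YS)
    have sm: "(\<Sum>j. l * (m ^ Suc j * Y j i)) = l * (\<Sum>j. m ^ Suc j * Y j i)"
      by (rule suminf_mult[OF sumT])
    have "l * x i = - (\<Sum>j. l * (m ^ Suc j * Y j i))"
      unfolding sm x_def by simp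
    also have "(\<lambda>j. l * (m ^ Suc j * Y j i)) = (\<lambda>j. m ^ j * Y j i)"
      using lm by (auto simp: fun_eq_iff mult.assoc[symmetric] mult.commute[of l])
    finally have L: "l * x i = - (\<Sum>j. m ^ j * Y j i)" .
    have s0: "summable (\<lambda>j. m ^ j * Y j i)"
    proof -
      have "summable (\<lambda>j. l * (m ^ Suc j * Y j i))" by (intro summable_mult sumT)
      also have "(\<lambda>j. l * (m ^ Suc j * Y j i)) = (\<lambda>j. m ^ j * Y j i)"
        using lm by (auto simp: fun_eq_iff mult.assoc[symmetric] mult.commute[of l])
      finally show ?thesis .
    qed
    have "(\<Sum>j. m ^ Suc j * Y (Suc j) i) = (\<Sum>j. m ^ j * Y j i) - Y 0 i"
      using suminf_split_head[OF s0] by simp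
    thus ?thesis using T L by (simp add: Y_def)
  qed
  have xbd: "(cmod (x i))\<^sup>2 \<le> (\<Sum>j. r ^ Suc j) * (\<Sum>j. r ^ Suc j * (cmod (Y j i))\<^sup>2)" for i
  proof -
    have sn: "summable (\<lambda>j. r ^ Suc j * cmod (Y j i))"
    proof (rule summable_comparison_test'[where g="\<lambda>j. r ^ Suc j * sqrt B" and N=0])
      show "summable (\<lambda>j. r ^ Suc j * sqrt B)" by (intro summable_mult2 sr)
      fix j show "norm (r ^ Suc j * cmod (Y j i)) \<le> r ^ Suc j * sqrt B"
        using r0 Ybd[of j i] by (simp add: abs_mult mult_left_mono)
    qed
    have s2: "summable (\<lambda>j. r ^ Suc j * (cmod (Y j i))\<^sup>2)"
    proof (rule summable_comparison_test'[where g="\<lambda>j. r ^ Suc j * B" and N=0])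
      show "summable (\<lambda>j. r ^ Suc j * B)" by (intro summable_mult2 sr)
      fix j
      have "(cmod (Y j i))\<^sup>2 \<le> B" using Ysum[of "{i}" j] by simp
      thus "norm (r ^ Suc j * (cmod (Y j i))\<^sup>2) \<le> r ^ Suc j * B"
        using r0 by (simp add: abs_mult mult_left_mono)
    qed
    have "cmod (x i) \<le> (\<Sum>j. r ^ Suc j * cmod (Y j i))"
    proof -
      have "cmod (x i) = cmod (\<Sum>j. m ^ Suc j * Y j i)" by (simp add: x_def)
      also have "\<dots> \<le> (\<Sum>j. cmod (m ^ Suc j * Y j i))"
        by (rule summable_norm) (simp add: norm_mult norm_power m sn del: power_Suc)
      also have "\<dots> = (\<Sum>j. r ^ Suc j * cmod (Y j i))"
        by (simp add: norm_mult norm_power m del: power_Suc)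
      finally show ?thesis .
    qed
    hence "(cmod (x i))\<^sup>2 \<le> (\<Sum>j. r ^ Suc j * cmod (Y j i))\<^sup>2"
      by (simp add: power_mono)
    also have "\<dots> \<le> (\<Sum>j. r ^ Suc j) * (\<Sum>j. r ^ Suc j * (cmod (Y j i))\<^sup>2)"
      by (rule series_CS) (use r0 sr sn s2 in auto)
    finally show ?thesis .
  qed
  define R where "R = (\<Sum>j. r ^ Suc j)"
  have R0: "0 \<le> R" unfolding R_def by (rule suminf_nonneg[OF sr]) (use r0 in auto)
  have "bfp x" unfolding bfp_def
  proof (intro exI allI impI)
    fix F :: "'a set" assume F: "finite F"
    have s2: "summable (\<lambda>j. r ^ Suc j * (cmod (Y j i))\<^sup>2)" for i
    proof (rule summable_comparison_test'[where g="\<lambda>j. r ^ Suc j * B" and N=0])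
      show "summable (\<lambda>j. r ^ Suc j * B)" by (intro summable_mult2 sr)
      fix j
      have "(cmod (Y j i))\<^sup>2 \<le> B" using Ysum[of "{i}" j] by simp
      thus "norm (r ^ Suc j * (cmod (Y j i))\<^sup>2) \<le> r ^ Suc j * B"
        using r0 by (simp add: abs_mult mult_left_mono)
    qed
    have "(\<Sum>i\<in>F. (cmod (x i))\<^sup>2) \<le> (\<Sum>i\<in>F. R * (\<Sum>j. r ^ Suc j * (cmod (Y j i))\<^sup>2))"
      by (rule sum_mono) (use xbd in \<open>simp add: R_def\<close>)
    also have "\<dots> = R * (\<Sum>j. \<Sum>i\<in>F. r ^ Suc j * (cmod (Y j i))\<^sup>2)"
    proof -
      have "(\<Sum>i\<in>F. (\<Sum>j. r ^ Suc j * (cmod (Y j i))\<^sup>2)) = (\<Sum>j. \<Sum>i\<in>F. r ^ Suc j * (cmod (Y j i))\<^sup>2)"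
        by (rule suminf_sum[symmetric]) (rule s2)
      thus ?thesis unfolding sum_distrib_left[symmetric] by simp
    qed
    also have "\<dots> \<le> R * (\<Sum>j. r ^ Suc j * B)"
    proof (intro mult_left_mono R0 suminf_le)
      fix j
      show "(\<Sum>i\<in>F. r ^ Suc j * (cmod (Y j i))\<^sup>2) \<le> r ^ Suc j * B"
        using Ysum[OF F, of j] r0 by (simp add: sum_distrib_left[symmetric] mult_left_mono)
      show "summable (\<lambda>j. \<Sum>i\<in>F. r ^ Suc j * (cmod (Y j i))\<^sup>2)" by (intro summable_sum s2)
      show "summable (\<lambda>j. r ^ Suc j * B)" by (intro summable_mult2 sr)
    qed
    finally show "(\<Sum>i\<in>F. (cmod (x i))\<^sup>2) \<le> R * (\<Sum>j. r ^ Suc j * B)" .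
  qed
  thus ?thesis using eq by (intro exI[of _ x]) auto
qed

lemma M1_eq: "M_psi1 a k n = (if -1 \<le> n then a k (n+1) else if k = 0 then 0 else a (k-1) (n+1))"
  by (simp add: M_psi1_def mult_affine_def omega_adj_def p_perp_def p_minus_def)

lemma M2_eq: "M_psi2 a k n = (if n < 0 then a k (n-1) else if k = 0 then 0 else a (k-1) (n-1))"
  by (simp add: M_psi2_def mult_affine_def omega_def p_perp_def p_minus_def)

definition p1 :: "nat \<times> int \<Rightarrow> (nat \<times> int) option" where
  "p1 = (\<lambda>(k, n). if -1 \<le> n then Some (k, n+1) else if k = 0 then None else Some (k-1, n+1))"
definition p2 :: "nat \<times> int \<Rightarrow> (nat \<times> int) option" where
  "p2 = (\<lambda>(k, n). if n < 0 then Some (k, n-1) else if k = 0 then None else Some (k-1, n-1))"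

lemma pinj_p1: "pinj p1"
  unfolding pinj_def p1_def by (auto split: if_splits)
lemma pinj_p2: "pinj p2"
  unfolding pinj_def p2_def by (auto split: if_splits)

lemma unc_M1: "unc (M_psi1 a) = Tp p1 (unc a)"
  by (auto simp: fun_eq_iff unc_def Tp_def p1_def M1_eq)
lemma unc_M2: "unc (M_psi2 a) = Tp p2 (unc a)"
  by (auto simp: fun_eq_iff unc_def Tp_def p2_def M2_eq)

lemma unc_oms: "unc (op_minus_scalar T l a) = (\<lambda>i. unc (T a) i - l * unc a i)"
  by (auto simp: fun_eq_iff unc_def op_minus_scalar_def)

definition cur :: "(nat \<times> int \<Rightarrow> complex) \<Rightarrow> nat \<Rightarrow> int \<Rightarrow> complex" where
  "cur x = (\<lambda>k n. x (k, n))"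
lemma unc_cur[simp]: "unc (cur x) = x" by (auto simp: unc_def cur_def fun_eq_iff)
lemma cur_unc[simp]: "cur (unc a) = a" by (auto simp: unc_def cur_def fun_eq_iff)
lemma unc_inj: "unc a = unc b \<Longrightarrow> a = b" by (metis cur_unc)

lemma H_lin: "a \<in> H2D_l2Z \<Longrightarrow> b \<in> H2D_l2Z \<Longrightarrow> (\<lambda>k n. c * a k n + d * b k n) \<in> H2D_l2Z"
proof -
  assume "a \<in> H2D_l2Z" "b \<in> H2D_l2Z"
  hence "bfp (\<lambda>i. c * unc a i + d * unc b i)" by (intro bfp_lin) (auto simp: H_iff_bfp)
  moreover have "unc (\<lambda>k n. c * a k n + d * b k n) = (\<lambda>i. c * unc a i + d * unc b i)"
    by (auto simp: unc_def fun_eq_iff)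
  ultimately show ?thesis unfolding H_iff_bfp by simp
qed

lemma H_diff: "a \<in> H2D_l2Z \<Longrightarrow> b \<in> H2D_l2Z \<Longrightarrow> a - b \<in> H2D_l2Z"
  using H_lin[of a b 1 "-1"] by (simp add: fun_diff_def)

lemma H_zero: "(0 :: nat \<Rightarrow> int \<Rightarrow> complex) \<in> H2D_l2Z"
proof -
  have "unc 0 = (\<lambda>i. 0)" by (auto simp: unc_def fun_eq_iff)
  thus ?thesis using bfp_zero unfolding H_iff_bfp by simp
qed

lemma H_M1: "a \<in> H2D_l2Z \<Longrightarrow> op_minus_scalar M_psi1 l a \<in> H2D_l2Z"
proof -
  assume a: "a \<in> H2D_l2Z"
  have "bfp (\<lambda>i. 1 * Tp p1 (unc a) i + (- l) * unc a i)"
    by (intro bfp_lin bfp_Tp pinj_p1) (use a in \<open>auto simp: H_iff_bfp\<close>)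
  thus ?thesis by (simp add: H_iff_bfp unc_oms unc_M1)
qed

lemma H_M2: "a \<in> H2D_l2Z \<Longrightarrow> op_minus_scalar M_psi2 l a \<in> H2D_l2Z"
proof -
  assume a: "a \<in> H2D_l2Z"
  have "bfp (\<lambda>i. 1 * Tp p2 (unc a) i + (- l) * unc a i)"
    by (intro bfp_lin bfp_Tp pinj_p2) (use a in \<open>auto simp: H_iff_bfp\<close>)
  thus ?thesis by (simp add: H_iff_bfp unc_oms unc_M2)
qed

lemma oms_diff: "op_minus_scalar M_psi1 l (a - b) = op_minus_scalar M_psi1 l a - op_minus_scalar M_psi1 l b"
  by (auto simp: fun_eq_iff op_minus_scalar_def M1_eq algebra_simps)
lemma oms_diff2: "op_minus_scalar M_psi2 l (a - b) = op_minus_scalar M_psi2 l a - op_minus_scalar M_psi2 l b"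
  by (auto simp: fun_eq_iff op_minus_scalar_def M2_eq algebra_simps)
lemma oms_zero1: "op_minus_scalar M_psi1 l 0 = 0"
  by (auto simp: fun_eq_iff op_minus_scalar_def M1_eq)
lemma oms_zero2: "op_minus_scalar M_psi2 l 0 = 0"
  by (auto simp: fun_eq_iff op_minus_scalar_def M2_eq)
lemma oms_comm: "op_minus_scalar M_psi1 l1 (op_minus_scalar M_psi2 l2 a) =
   op_minus_scalar M_psi2 l2 (op_minus_scalar M_psi1 l1 a)"
  by (auto simp: fun_eq_iff op_minus_scalar_def M1_eq M2_eq algebra_simps)

lemma exactA:
  fixes A B :: "'v::ab_group_add \<Rightarrow> 'v"
  assumes H0: "0 \<in> H" and HA: "\<And>x. x \<in> H \<Longrightarrow> A x \<in> H" and HB: "\<And>x. x \<in> H \<Longrightarrow> B x \<in> H"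
    and Hd: "\<And>x y. x \<in> H \<Longrightarrow> y \<in> H \<Longrightarrow> x - y \<in> H"
    and Ad: "\<And>x y. A (x - y) = A x - A y" and Bd: "\<And>x y. B (x - y) = B x - B y"
    and comm: "\<And>x. A (B x) = B (A x)"
    and inj: "\<And>x. x \<in> H \<Longrightarrow> A x = 0 \<Longrightarrow> x = 0"
    and surj: "\<And>y. y \<in> H \<Longrightarrow> \<exists>x\<in>H. A x = y"
  shows "\<not> koszul_breaks_at H A B n"
proof -
  have A0: "A 0 = 0" using Ad[of 0 0] by simp
  have B0: "B 0 = 0" using Bd[of 0 0] by simp
  have s1: "{0} = {h\<in>H. A h = 0 \<and> B h = 0}" using H0 A0 B0 inj by auto
  have s2: "(\<lambda>h. (A h, B h)) ` H = {(h1, h2). h1 \<in> H \<and> h2 \<in> H \<and> A h2 - B h1 = 0}"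
  proof (intro equalityI subsetI)
    fix z assume "z \<in> (\<lambda>h. (A h, B h)) ` H"
    then obtain h where h: "h \<in> H" "z = (A h, B h)" by auto
    thus "z \<in> {(h1, h2). h1 \<in> H \<and> h2 \<in> H \<and> A h2 - B h1 = 0}" using HA HB comm by auto
  next
    fix z assume "z \<in> {(h1, h2). h1 \<in> H \<and> h2 \<in> H \<and> A h2 - B h1 = 0}"
    then obtain h1 h2 where z: "z = (h1, h2)" "h1 \<in> H" "h2 \<in> H" "A h2 = B h1" by auto
    obtain h where h: "h \<in> H" "A h = h1" using surj z(2) by blast
    have "A (B h - h2) = 0" using Ad comm h z by simp
    hence "B h - h2 = 0" using inj Hd HB h z by blast
    hence "B h = h2" by simp
    thus "z \<in> (\<lambda>h. (A h, B h)) ` H" using h z by auto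
  qed
  have s3: "(\<lambda>(h1, h2). A h2 - B h1) ` (H \<times> H) = H"
  proof (intro equalityI subsetI)
    fix z assume "z \<in> (\<lambda>(h1, h2). A h2 - B h1) ` (H \<times> H)"
    thus "z \<in> H" using HA HB Hd by auto
  next
    fix z assume "z \<in> H"
    then obtain x where "x \<in> H" "A x = z" using surj by blast
    thus "z \<in> (\<lambda>(h1, h2). A h2 - B h1) ` (H \<times> H)" using H0 B0
      by (intro image_eqI[where x="(0, x)"]) auto
  qed
  show ?thesis unfolding koszul_breaks_at_def using s1 s2 s3 by auto
qed

lemma exactB:
  fixes A B :: "'v::ab_group_add \<Rightarrow> 'v"
  assumes H0: "0 \<in> H" and HA: "\<And>x. x \<in> H \<Longrightarrow> A x \<in> H" and HB: "\<And>x. x \<in> H \<Longrightarrow> B x \<in> H"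
    and Hd: "\<And>x y. x \<in> H \<Longrightarrow> y \<in> H \<Longrightarrow> x - y \<in> H"
    and Ad: "\<And>x y. A (x - y) = A x - A y" and Bd: "\<And>x y. B (x - y) = B x - B y"
    and comm: "\<And>x. A (B x) = B (A x)"
    and inj: "\<And>x. x \<in> H \<Longrightarrow> B x = 0 \<Longrightarrow> x = 0"
    and surj: "\<And>y. y \<in> H \<Longrightarrow> \<exists>x\<in>H. B x = y"
  shows "\<not> koszul_breaks_at H A B n"
proof -
  have A0: "A 0 = 0" using Ad[of 0 0] by simp
  have B0: "B 0 = 0" using Bd[of 0 0] by simp
  have s1: "{0} = {h\<in>H. A h = 0 \<and> B h = 0}" using H0 A0 B0 inj by auto
  have s2: "(\<lambda>h. (A h, B h)) ` H = {(h1, h2). h1 \<in> H \<and> h2 \<in> H \<and> A h2 - B h1 = 0}"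
  proof (intro equalityI subsetI)
    fix z assume "z \<in> (\<lambda>h. (A h, B h)) ` H"
    then obtain h where h: "h \<in> H" "z = (A h, B h)" by auto
    thus "z \<in> {(h1, h2). h1 \<in> H \<and> h2 \<in> H \<and> A h2 - B h1 = 0}" using HA HB comm by auto
  next
    fix z assume "z \<in> {(h1, h2). h1 \<in> H \<and> h2 \<in> H \<and> A h2 - B h1 = 0}"
    then obtain h1 h2 where z: "z = (h1, h2)" "h1 \<in> H" "h2 \<in> H" "A h2 = B h1" by auto
    obtain h where h: "h \<in> H" "B h = h2" using surj z(3) by blast
    have "B (A h) = B h1" using comm[of h] h z by simp
    hence "B (A h - h1) = 0" using Bd[of "A h" h1] by simp
    hence "A h - h1 = 0" using inj Hd HA h z by blast
    hence "A h = h1" by simp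
    thus "z \<in> (\<lambda>h. (A h, B h)) ` H" using h z by auto
  qed
  have s3: "(\<lambda>(h1, h2). A h2 - B h1) ` (H \<times> H) = H"
  proof (intro equalityI subsetI)
    fix z assume "z \<in> (\<lambda>(h1, h2). A h2 - B h1) ` (H \<times> H)"
    thus "z \<in> H" using HA HB Hd by auto
  next
    fix z assume z: "z \<in> H"
    hence "0 - z \<in> H" using Hd H0 by blast
    then obtain x where "x \<in> H" "B x = 0 - z" using surj by blast
    thus "z \<in> (\<lambda>(h1, h2). A h2 - B h1) ` (H \<times> H)" using H0 A0
      by (intro image_eqI[where x="(x, 0)"]) auto
  qed
  show ?thesis unfolding koszul_breaks_at_def using s1 s2 s3 by auto
qed

lemma inv_M:
  assumes p: "pinj p" and l: "1 < cmod l" and T: "\<And>a. unc (T a) = Tp p (unc a)"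
  shows "\<And>x. x \<in> H2D_l2Z \<Longrightarrow> op_minus_scalar T l x = 0 \<Longrightarrow> x = 0"
    and "\<And>y. y \<in> H2D_l2Z \<Longrightarrow> \<exists>x\<in>H2D_l2Z. op_minus_scalar T l x = y"
proof -
  fix x assume x: "x \<in> H2D_l2Z" and e: "op_minus_scalar T l x = 0"
  have u0: "unc 0 = (\<lambda>i. 0)" by (auto simp: unc_def fun_eq_iff)
  have "(\<lambda>i. Tp p (unc x) i - l * unc x i) = unc (op_minus_scalar T l x)" by (simp add: unc_oms T)
  also have "\<dots> = (\<lambda>i. 0)" using e u0 by simp
  finally have "\<And>i. Tp p (unc x) i - l * unc x i = 0" by (metis (mono_tags) fun_cong)
  moreover have bx: "bfp (unc x)" using x by (simp add: H_iff_bfp)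
  ultimately have "\<And>i. unc x i = 0" using Tp_minus_inj[OF l bx, of p] by blast
  hence "unc x = unc 0" using u0 by auto
  thus "x = 0" by (rule unc_inj)
next
  fix y assume y: "y \<in> H2D_l2Z"
  obtain x where x: "bfp x" "(\<lambda>i. Tp p x i - l * x i) = unc y"
    using Tp_minus_surj[OF p l] y by (auto simp: H_iff_bfp)
  have "op_minus_scalar T l (cur x) = y"
    by (rule unc_inj) (simp add: unc_oms T x)
  thus "\<exists>x\<in>H2D_l2Z. op_minus_scalar T l x = y" using x by (intro bexI[of _ "cur x"]) (auto simp: H_iff_bfp)
qed

lemma outside_exact:
  assumes "1 < cmod l1 \<or> 1 < cmod l2"
  shows "\<not> koszul_breaks_at H2D_l2Z (op_minus_scalar M_psi1 l1) (op_minus_scalar M_psi2 l2) n"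
  using assms
proof
  assume l: "1 < cmod l1"
  show ?thesis
    by (rule exactA[OF H_zero H_M1 H_M2 H_diff oms_diff oms_diff2 oms_comm
        inv_M(1)[OF pinj_p1 l unc_M1] inv_M(2)[OF pinj_p1 l unc_M1]])
next
  assume l: "1 < cmod l2"
  show ?thesis
    by (rule exactB[OF H_zero H_M1 H_M2 H_diff oms_diff oms_diff2 oms_comm
        inv_M(1)[OF pinj_p2 l unc_M2] inv_M(2)[OF pinj_p2 l unc_M2]])
qed

lemma bfp_dom:
  fixes x :: "'i \<Rightarrow> complex" and f :: "'i \<Rightarrow> nat" and g :: "nat \<Rightarrow> real"
  assumes bd: "\<And>i. x i \<noteq> 0 \<Longrightarrow> (cmod (x i))\<^sup>2 \<le> g (f i)"
    and inj: "inj_on f {i. x i \<noteq> 0}" and g0: "\<And>j. 0 \<le> g j" and sg: "summable g"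
  shows "bfp x"
  unfolding bfp_def
proof (intro exI allI impI)
  fix F :: "'i set" assume F: "finite F"
  let ?G = "{i\<in>F. x i \<noteq> 0}"
  have "(\<Sum>i\<in>F. (cmod (x i))\<^sup>2) = (\<Sum>i\<in>?G. (cmod (x i))\<^sup>2)"
    by (rule sum.mono_neutral_right) (auto simp: F)
  also have "\<dots> \<le> (\<Sum>i\<in>?G. g (f i))" by (rule sum_mono) (simp add: bd)
  also have "\<dots> = (\<Sum>j\<in>f ` ?G. g j)"
    by (rule sum.reindex[symmetric, unfolded comp_def]) (rule inj_on_subset[OF inj], auto)
  also have "\<dots> \<le> suminf g" by (rule sum_le_suminf[OF sg]) (use F g0 in auto)
  finally show "(\<Sum>i\<in>F. (cmod (x i))\<^sup>2) \<le> suminf g" .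
qed

lemma geo_summable: "cmod (l::complex) < 1 \<Longrightarrow> summable (\<lambda>j. ((cmod l)\<^sup>2) ^ j)"
  by (rule summable_geometric) (simp add: abs_square_less_1)

lemma sqpow: "(cmod ((l::complex) ^ m))\<^sup>2 = ((cmod l)\<^sup>2) ^ m"
  by (metis norm_power power_mult[symmetric] power_mult mult.commute)

lemma interior_break:
  assumes l1: "cmod l1 < 1" and l2: "cmod l2 < 1"
  shows "koszul_breaks_at H2D_l2Z (op_minus_scalar M_psi1 l1) (op_minus_scalar M_psi2 l2) 2"
proof -
  define h2 :: "nat \<Rightarrow> int \<Rightarrow> complex" where "h2 k n = (if k = 0 \<and> 0 \<le> n then l1 ^ nat n else 0)" for k n
  define h1 :: "nat \<Rightarrow> int \<Rightarrow> complex" where "h1 k n = (if k = 0 \<and> n \<le> -2 then l2 ^ nat (-2 - n) else 0)" for k n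
  have H2: "h2 \<in> H2D_l2Z" unfolding H_iff_bfp
  proof (rule bfp_dom[where f="\<lambda>i. nat (snd i)" and g="\<lambda>j. ((cmod l1)\<^sup>2) ^ j"])
    show "summable (\<lambda>j. ((cmod l1)\<^sup>2) ^ j)" by (rule geo_summable[OF l1])
    show "inj_on (\<lambda>i. nat (snd i)) {i. unc h2 i \<noteq> 0}"
      by (auto simp: inj_on_def unc_def h2_def split: if_splits)
    fix i show "unc h2 i \<noteq> 0 \<Longrightarrow> (cmod (unc h2 i))\<^sup>2 \<le> ((cmod l1)\<^sup>2) ^ nat (snd i)"
      by (cases i) (auto simp: unc_def h2_def sqpow)
  qed simp
  have H1: "h1 \<in> H2D_l2Z" unfolding H_iff_bfp
  proof (rule bfp_dom[where f="\<lambda>i. nat (-2 - snd i)" and g="\<lambda>j. ((cmod l2)\<^sup>2) ^ j"])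
    show "summable (\<lambda>j. ((cmod l2)\<^sup>2) ^ j)" by (rule geo_summable[OF l2])
    show "inj_on (\<lambda>i. nat (-2 - snd i)) {i. unc h1 i \<noteq> 0}"
      by (auto simp: inj_on_def unc_def h1_def split: if_splits)
    fix i show "unc h1 i \<noteq> 0 \<Longrightarrow> (cmod (unc h1 i))\<^sup>2 \<le> ((cmod l2)\<^sup>2) ^ nat (-2 - snd i)"
      by (cases i) (auto simp: unc_def h1_def sqpow)
  qed simp
  have ker: "op_minus_scalar M_psi1 l1 h2 - op_minus_scalar M_psi2 l2 h1 = 0"
  proof (intro ext)
    fix k :: nat and n :: int
    have a: "op_minus_scalar M_psi1 l1 h2 k n = (if k = 0 \<and> n = -1 then 1 else 0)"
    proof (cases "k = 0 \<and> 0 \<le> n")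
      case True
      hence "nat (n + 1) = Suc (nat n)" by (simp add: nat_add_distrib)
      thus ?thesis using True by (simp add: op_minus_scalar_def M1_eq h2_def)
    qed (auto simp: op_minus_scalar_def M1_eq h2_def)
    have b: "op_minus_scalar M_psi2 l2 h1 k n = (if k = 0 \<and> n = -1 then 1 else 0)"
    proof (cases "k = 0 \<and> n \<le> -2")
      case True
      hence "nat (-2 - (n - 1)) = Suc (nat (-2 - n))" by (simp add: nat_add_distrib[symmetric] Suc_as_int)
      thus ?thesis using True by (simp add: op_minus_scalar_def M2_eq h1_def)
    qed (auto simp: op_minus_scalar_def M2_eq h1_def)
    show "(op_minus_scalar M_psi1 l1 h2 - op_minus_scalar M_psi2 l2 h1) k n = 0 k n"
      using a b by simp
  qed
  have notran: "(h1, h2) \<notin> (\<lambda>h. (op_minus_scalar M_psi1 l1 h, op_minus_scalar M_psi2 l2 h)) ` H2D_l2Z"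
  proof
    assume "(h1, h2) \<in> (\<lambda>h. (op_minus_scalar M_psi1 l1 h, op_minus_scalar M_psi2 l2 h)) ` H2D_l2Z"
    then obtain h where h: "h \<in> H2D_l2Z" "h1 = op_minus_scalar M_psi1 l1 h" by auto
    obtain M where M: "\<And>i. cmod (unc h i) \<le> M" using bfp_bounded[of "unc h"] h(1) unfolding H_iff_bfp by blast
    define a where "a j = h j (-2 - int j)" for j
    have eq: "h1 j (-2 - int j) = M_psi1 h j (-2 - int j) - l1 * a j" for j
      using h(2) by (simp add: op_minus_scalar_def a_def)
    have e0: "l1 * a 0 = -1"
    proof -
      have A: "M_psi1 h 0 (-2 - int 0) = 0" by (simp add: M1_eq)
      have B: "h1 0 (-2 - int 0) = 1" by (simp add: h1_def)
      have "1 = 0 - l1 * a 0" using eq[of 0] unfolding A B .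
      hence "0 - l1 * a 0 = 1" by (rule sym)
      thus ?thesis by (metis diff_0 minus_equation_iff)
    qed
    hence l10: "l1 \<noteq> 0" by auto
    have eS: "l1 * a (Suc j) = a j" for j
    proof -
      have A: "M_psi1 h (Suc j) (-2 - int (Suc j)) = a j" by (simp add: M1_eq a_def)
      have B: "h1 (Suc j) (-2 - int (Suc j)) = 0" by (simp add: h1_def)
      have "0 = a j - l1 * a (Suc j)" using eq[of "Suc j"] unfolding A B .
      thus ?thesis by (metis right_minus_eq)
    qed
    have aj: "a j = - ((1 / l1) ^ Suc j)" for j
    proof (induction j)
      case 0
      show ?case using e0 l10 by (simp add: field_simps)
    next
      case (Suc j)
      have "l1 * a (Suc j) = - ((1 / l1) ^ Suc j)" using Suc.IH eS[of j] by simp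
      thus ?case using l10 by (simp add: field_simps)
    qed
    have "1 < 1 / cmod l1" using l1 l10 by (simp add: field_simps)
    then obtain j where j: "M < (1 / cmod l1) ^ j" using real_arch_pow by blast
    have "(1 / cmod l1) ^ j \<le> (1 / cmod l1) ^ Suc j"
      using \<open>1 < 1 / cmod l1\<close> by (intro power_increasing) auto
    also have "\<dots> = cmod (a j)" by (simp add: aj norm_power norm_divide)
    also have "\<dots> \<le> M" using M[of "(j, -2 - int j)"] by (simp add: a_def unc_def)
    finally show False using j by simp
  qed
  show ?thesis unfolding koszul_breaks_at_def using H1 H2 ker notran
    by auto
qed

lemma sumC:
  fixes z :: complex and u :: "nat \<Rightarrow> complex"
  assumes z: "cmod z < 1" and u: "\<And>k. cmod (u k) \<le> M"
  shows "summable (\<lambda>k. z ^ k * u k)" "cmod (\<Sum>k. z ^ k * u k) \<le> M / (1 - cmod z)"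
proof -
  have M0: "0 \<le> M" using u[of 0] norm_ge_zero order_trans by blast
  have sg: "summable (\<lambda>k. M * cmod z ^ k)" by (intro summable_mult summable_geometric) (use z in auto)
  have nb: "norm (z ^ k * u k) \<le> M * cmod z ^ k" for k
    unfolding norm_mult norm_power by (subst mult.commute) (rule mult_right_mono[OF u], simp)
  show s: "summable (\<lambda>k. z ^ k * u k)" by (rule summable_comparison_test'[OF sg, of 0]) (rule nb)
  have sn: "summable (\<lambda>k. norm (z ^ k * u k))" by (rule summable_comparison_test'[OF sg, of 0]) (use nb in auto)
  have "cmod (\<Sum>k. z ^ k * u k) \<le> (\<Sum>k. norm (z ^ k * u k))" by (rule summable_norm[OF sn])
  also have "\<dots> \<le> (\<Sum>k. M * cmod z ^ k)" by (rule suminf_le[OF nb sn sg])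
  also have "\<dots> = M / (1 - cmod z)" using z by (simp add: suminf_mult suminf_geometric summable_geometric)
  finally show "cmod (\<Sum>k. z ^ k * u k) \<le> M / (1 - cmod z)" .
qed

lemma suminf_shift_if:
  fixes z :: complex
  assumes s: "summable (\<lambda>k. z ^ k * u k)"
  shows "summable (\<lambda>k. z ^ k * (if k = 0 then 0 else u (k - 1)))"
    "(\<Sum>k. z ^ k * (if k = 0 then 0 else u (k - 1))) = z * (\<Sum>k. z ^ k * u k)"
proof -
  define f where "f = (\<lambda>k. z ^ k * (if k = 0 then 0 else u (k - 1)))"
  have fS: "(\<lambda>k. f (Suc k)) = (\<lambda>k. z * (z ^ k * u k))" by (auto simp: f_def fun_eq_iff)
  have "summable (\<lambda>k. f (Suc k))" unfolding fS by (intro summable_mult s)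
  hence sf: "summable f" by (simp add: summable_Suc_iff)
  thus "summable (\<lambda>k. z ^ k * (if k = 0 then 0 else u (k - 1)))" unfolding f_def .
  have h: "(\<Sum>k. f (Suc k)) = suminf f - f 0" by (rule suminf_split_head[OF sf])
  have f0: "f 0 = 0" by (simp add: f_def)
  have "suminf f = (\<Sum>k. f (Suc k))" using h f0 by simp
  also have "\<dots> = (\<Sum>k. z * (z ^ k * u k))" by (simp only: fS)
  also have "\<dots> = z * (\<Sum>k. z ^ k * u k)" by (rule suminf_mult[OF s])
  finally show "(\<Sum>k. z ^ k * (if k = 0 then 0 else u (k - 1))) = z * (\<Sum>k. z ^ k * u k)"
    unfolding f_def .
qed

lemma harmonic_contra:
  fixes c :: "nat \<Rightarrow> complex"
  assumes l: "cmod l = 1" and rec: "\<And>m. c (Suc m) - l * c m = l ^ Suc m / of_nat (Suc m)"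
    and bd: "\<And>m. cmod (c m) \<le> M"
  shows False
proof -
  have lc: "l * cnj l = 1" using l by (simp add: complex_norm_square[symmetric])
  define e where "e m = c m * cnj l ^ m" for m
  have eS: "e (Suc m) = e m + of_real (inverse (of_nat (Suc m)))" for m
  proof -
    have "c (Suc m) = l * c m + l ^ Suc m / of_nat (Suc m)" using rec[of m] by (simp add: algebra_simps)
    hence "e (Suc m) = (l * cnj l) * (c m * cnj l ^ m) + (l * cnj l) ^ Suc m / of_nat (Suc m)"
      by (simp add: e_def algebra_simps power_mult_distrib)
    thus ?thesis using lc by (simp add: e_def divide_inverse of_real_inverse)
  qed
  have em: "e m = e 0 + of_real (harm m)" for m
  proof (induction m)
    case 0 show ?case by (simp add: harm_def)
  next
    case (Suc m) thus ?case by (simp add: eS harm_Suc)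
  qed
  have ne: "cmod (e m) \<le> M" for m using bd[of m] l by (simp add: e_def norm_mult norm_power)
  have "harm m \<le> 2 * M" for m
  proof -
    have "Re (e m) = Re (e 0) + harm m" using em[of m] by simp
    moreover have "Re (e m) \<le> M" using ne[of m] complex_Re_le_cmod order_trans by blast
    moreover have "- M \<le> Re (e 0)" using ne[of 0] abs_Re_le_cmod[of "e 0"] by linarith
    ultimately show ?thesis by linarith
  qed
  obtain n :: nat where n: "exp (2 * M) < real n" using reals_Archimedean2 by blast
  have "2 * M = ln (exp (2 * M))" by simp
  also have "\<dots> < ln (real n + 1)" using n by (subst ln_less_cancel_iff) auto
  also have "\<dots> \<le> harm n" by (rule ln_le_harm)
  finally show False using \<open>\<And>m. harm m \<le> 2 * M\<close>[of n] by simp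
qed

lemma boundary_A:
  assumes l1: "cmod l1 = 1" and l2: "cmod l2 < 1"
  shows "koszul_breaks_at H2D_l2Z (op_minus_scalar M_psi1 l1) (op_minus_scalar M_psi2 l2) 3"
proof -
  define y :: "nat \<Rightarrow> int \<Rightarrow> complex" where
    "y k n = (if k = 0 \<and> 0 \<le> n then l1 ^ Suc (nat n) / of_nat (Suc (nat n)) else 0)" for k n
  have sg: "summable (\<lambda>j::nat. inverse (real (Suc j) ^ 2))"
    using inverse_power_summable[of 2, where 'a=real] by (simp add: summable_Suc_iff[symmetric, where f="\<lambda>n. inverse (real n ^ 2)"])
  have yH: "y \<in> H2D_l2Z" unfolding H_iff_bfp
  proof (rule bfp_dom[where f="\<lambda>i. nat (snd i)" and g="\<lambda>j. inverse (real (Suc j) ^ 2)"])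
    show "inj_on (\<lambda>i. nat (snd i)) {i. unc y i \<noteq> 0}"
      by (auto simp: inj_on_def unc_def y_def split: if_splits)
    fix i show "unc y i \<noteq> 0 \<Longrightarrow> (cmod (unc y i))\<^sup>2 \<le> inverse (real (Suc (nat (snd i))) ^ 2)"
    proof -
      assume nz: "unc y i \<noteq> 0"
      have "cmod (unc y i) = inverse (real (Suc (nat (snd i))))"
        using nz by (cases i) (auto simp: unc_def y_def norm_divide norm_mult norm_power norm_inverse l1 divide_inverse simp del: of_nat_Suc split: if_splits)
      thus ?thesis by (simp add: power_inverse)
    qed
  qed (use sg in auto)
  have "y \<notin> (\<lambda>(h1, h2). op_minus_scalar M_psi1 l1 h2 - op_minus_scalar M_psi2 l2 h1) ` (H2D_l2Z \<times> H2D_l2Z)"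
  proof
    assume "y \<in> (\<lambda>(h1, h2). op_minus_scalar M_psi1 l1 h2 - op_minus_scalar M_psi2 l2 h1) ` (H2D_l2Z \<times> H2D_l2Z)"
    then obtain x1 x2 where x: "x1 \<in> H2D_l2Z" "x2 \<in> H2D_l2Z"
      and yeq: "y = op_minus_scalar M_psi1 l1 x2 - op_minus_scalar M_psi2 l2 x1" by auto
    obtain M1 where M1: "\<And>i. cmod (unc x1 i) \<le> M1" using bfp_bounded[of "unc x1"] x(1) unfolding H_iff_bfp by blast
    obtain M2 where M2: "\<And>i. cmod (unc x2 i) \<le> M2" using bfp_bounded[of "unc x2"] x(2) unfolding H_iff_bfp by blast
    have b1: "cmod (x1 k n) \<le> M1" for k n using M1[of "(k, n)"] by (simp add: unc_def)
    have b2: "cmod (x2 k n) \<le> M2" for k n using M2[of "(k, n)"] by (simp add: unc_def)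
    define c where "c m = (\<Sum>k. l2 ^ k * x2 k (int k + int m))" for m
    define d where "d m = (\<Sum>k. l2 ^ k * x1 k (int k + int m))" for m
    have sc: "summable (\<lambda>k. l2 ^ k * x2 k (int k + int m))" for m by (rule sumC(1)[OF l2 b2])
    have sd: "summable (\<lambda>k. l2 ^ k * x1 k (int k + int m))" for m by (rule sumC(1)[OF l2 b1])
    have cb: "cmod (c m) \<le> M2 / (1 - cmod l2)" for m unfolding c_def by (rule sumC(2)[OF l2 b2])
    have rec: "c (Suc m) - l1 * c m = l1 ^ Suc m / of_nat (Suc m)" for m
    proof -
      have pt: "l2 ^ k * y k (int k + int m) =
         (l2 ^ k * x2 k (int k + int (Suc m)) - l1 * (l2 ^ k * x2 k (int k + int m)))
         - (l2 ^ k * (if k = 0 then 0 else x1 (k - 1) (int (k - 1) + int m)) - l2 * (l2 ^ k * x1 k (int k + int m)))" for k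
      proof -
        have "y k (int k + int m) = op_minus_scalar M_psi1 l1 x2 k (int k + int m) - op_minus_scalar M_psi2 l2 x1 k (int k + int m)"
          using yeq by simp
        also have "\<dots> = (x2 k (int k + int (Suc m)) - l1 * x2 k (int k + int m))
            - ((if k = 0 then 0 else x1 (k - 1) (int k + int m - 1)) - l2 * x1 k (int k + int m))"
          by (simp add: op_minus_scalar_def M1_eq M2_eq add.assoc add.commute[of "int m" 1])
        also have "(if k = 0 then 0 else x1 (k - 1) (int k + int m - 1)) = (if k = 0 then 0 else x1 (k - 1) (int (k - 1) + int m))"
          by (cases k) auto
        finally have Y: "y k (int k + int m) = (x2 k (int k + int (Suc m)) - l1 * x2 k (int k + int m))
            - ((if k = 0 then 0 else x1 (k - 1) (int (k - 1) + int m)) - l2 * x1 k (int k + int m))" .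
        have alg: "\<And>a b X c. l2 ^ k * ((a - l1 * b) - (X - l2 * c)) = (l2 ^ k * a - l1 * (l2 ^ k * b)) - (l2 ^ k * X - l2 * (l2 ^ k * c))"
          by (simp add: algebra_simps)
        show ?thesis unfolding Y by (rule alg)
      qed
      have lhs: "(\<lambda>k. l2 ^ k * y k (int k + int m)) sums (l1 ^ Suc m / of_nat (Suc m))"
      proof -
        have "(\<lambda>k. l2 ^ k * y k (int k + int m)) = (\<lambda>k. if k = 0 then l1 ^ Suc m / of_nat (Suc m) else 0)"
          by (auto simp: fun_eq_iff y_def)
        thus ?thesis using sums_single[of 0 "\<lambda>_. l1 ^ Suc m / of_nat (Suc m)"] by simp
      qed
      have s1: "summable (\<lambda>k. l2 ^ k * (if k = 0 then 0 else x1 (k - 1) (int (k - 1) + int m)))"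
        by (rule suminf_shift_if(1)[OF sd])
      have e1: "(\<Sum>k. l2 ^ k * (if k = 0 then 0 else x1 (k - 1) (int (k - 1) + int m))) = l2 * d m"
        unfolding d_def by (rule suminf_shift_if(2)[OF sd])
      have "(\<lambda>k. (l2 ^ k * x2 k (int k + int (Suc m)) - l1 * (l2 ^ k * x2 k (int k + int m)))
         - (l2 ^ k * (if k = 0 then 0 else x1 (k - 1) (int (k - 1) + int m)) - l2 * (l2 ^ k * x1 k (int k + int m))))
         sums ((c (Suc m) - l1 * c m) - (l2 * d m - l2 * d m))"
      proof -
        have s1s: "(\<lambda>k. l2 ^ k * (if k = 0 then 0 else x1 (k - 1) (int (k - 1) + int m))) sums (l2 * d m)"
          using summable_sums[OF s1] e1 by simp
        show ?thesis unfolding c_def d_def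
          by (intro sums_diff sums_mult summable_sums sc sd s1s[unfolded d_def])
      qed
      hence "(\<lambda>k. l2 ^ k * y k (int k + int m)) sums (c (Suc m) - l1 * c m)" using pt by simp
      thus ?thesis using lhs sums_unique2 by metis
    qed
    show False by (rule harmonic_contra[OF l1 rec cb])
  qed
  with yH show ?thesis unfolding koszul_breaks_at_def by auto
qed

lemma boundary_B:
  assumes l1: "cmod l1 < 1" and l2: "cmod l2 = 1"
  shows "koszul_breaks_at H2D_l2Z (op_minus_scalar M_psi1 l1) (op_minus_scalar M_psi2 l2) 3"
proof -
  define y :: "nat \<Rightarrow> int \<Rightarrow> complex" where
    "y k n = (if k = 0 \<and> n \<le> -2 then - (l2 ^ Suc (nat (-2 - n)) / of_nat (Suc (nat (-2 - n)))) else 0)" for k n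
  have sg: "summable (\<lambda>j::nat. inverse (real (Suc j) ^ 2))"
    using inverse_power_summable[of 2, where 'a=real] by (simp add: summable_Suc_iff[symmetric, where f="\<lambda>n. inverse (real n ^ 2)"])
  have yH: "y \<in> H2D_l2Z" unfolding H_iff_bfp
  proof (rule bfp_dom[where f="\<lambda>i. nat (-2 - snd i)" and g="\<lambda>j. inverse (real (Suc j) ^ 2)"])
    show "inj_on (\<lambda>i. nat (-2 - snd i)) {i. unc y i \<noteq> 0}"
      by (auto simp: inj_on_def unc_def y_def split: if_splits)
    fix i show "unc y i \<noteq> 0 \<Longrightarrow> (cmod (unc y i))\<^sup>2 \<le> inverse (real (Suc (nat (-2 - snd i))) ^ 2)"
    proof -
      assume nz: "unc y i \<noteq> 0"
      have "cmod (unc y i) = inverse (real (Suc (nat (-2 - snd i))))"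
        using nz by (cases i) (auto simp: unc_def y_def norm_divide norm_mult norm_power norm_inverse l2 divide_inverse simp del: of_nat_Suc split: if_splits)
      thus ?thesis by (simp add: power_inverse)
    qed
  qed (use sg in auto)
  have "y \<notin> (\<lambda>(h1, h2). op_minus_scalar M_psi1 l1 h2 - op_minus_scalar M_psi2 l2 h1) ` (H2D_l2Z \<times> H2D_l2Z)"
  proof
    assume "y \<in> (\<lambda>(h1, h2). op_minus_scalar M_psi1 l1 h2 - op_minus_scalar M_psi2 l2 h1) ` (H2D_l2Z \<times> H2D_l2Z)"
    then obtain x1 x2 where x: "x1 \<in> H2D_l2Z" "x2 \<in> H2D_l2Z"
      and yeq: "y = op_minus_scalar M_psi1 l1 x2 - op_minus_scalar M_psi2 l2 x1" by auto
    obtain M1 where M1: "\<And>i. cmod (unc x1 i) \<le> M1" using bfp_bounded[of "unc x1"] x(1) unfolding H_iff_bfp by blast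
    obtain M2 where M2: "\<And>i. cmod (unc x2 i) \<le> M2" using bfp_bounded[of "unc x2"] x(2) unfolding H_iff_bfp by blast
    have b1: "cmod (x1 k n) \<le> M1" for k n using M1[of "(k, n)"] by (simp add: unc_def)
    have b2: "cmod (x2 k n) \<le> M2" for k n using M2[of "(k, n)"] by (simp add: unc_def)
    define c where "c m = (\<Sum>k. l1 ^ k * x1 k (-2 - int m - int k))" for m
    define d where "d m = (\<Sum>k. l1 ^ k * x2 k (-2 - int m - int k))" for m
    have sc: "summable (\<lambda>k. l1 ^ k * x1 k (-2 - int m - int k))" for m by (rule sumC(1)[OF l1 b1])
    have sd: "summable (\<lambda>k. l1 ^ k * x2 k (-2 - int m - int k))" for m by (rule sumC(1)[OF l1 b2])
    have cb: "cmod (c m) \<le> M1 / (1 - cmod l1)" for m unfolding c_def by (rule sumC(2)[OF l1 b1])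
    have rec: "c (Suc m) - l2 * c m = l2 ^ Suc m / of_nat (Suc m)" for m
    proof -
      have pt: "l1 ^ k * y k (-2 - int m - int k) =
         (l1 ^ k * (if k = 0 then 0 else x2 (k - 1) (-2 - int m - int (k - 1))) - l1 * (l1 ^ k * x2 k (-2 - int m - int k)))
         - (l1 ^ k * x1 k (-2 - int (Suc m) - int k) - l2 * (l1 ^ k * x1 k (-2 - int m - int k)))" for k
      proof -
        have "y k (-2 - int m - int k) = op_minus_scalar M_psi1 l1 x2 k (-2 - int m - int k) - op_minus_scalar M_psi2 l2 x1 k (-2 - int m - int k)"
          using yeq by simp
        also have "\<dots> = (M_psi1 x2 k (-2 - int m - int k) - l1 * x2 k (-2 - int m - int k))
            - (M_psi2 x1 k (-2 - int m - int k) - l2 * x1 k (-2 - int m - int k))"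
          by (simp only: op_minus_scalar_def)
        also have "M_psi1 x2 k (-2 - int m - int k) = (if k = 0 then 0 else x2 (k - 1) (-2 - int m - int k + 1))"
        proof -
          have c: "(-1 \<le> -2 - int m - int k) = False" by simp
          show ?thesis unfolding M1_eq by (simp only: c if_False)
        qed
        also have "M_psi2 x1 k (-2 - int m - int k) = x1 k (-2 - int (Suc m) - int k)"
        proof -
          have c: "(-2 - int m - int k < 0) = True" by simp
          have e: "-2 - int m - int k - 1 = -2 - int (Suc m) - int k" by simp
          show ?thesis unfolding M2_eq by (simp only: c if_True e)
        qed
        also have "(if k = 0 then 0 else x2 (k - 1) (-2 - int m - int k + 1)) = (if k = 0 then 0 else x2 (k - 1) (-2 - int m - int (k - 1)))"
        proof (cases k)
          case (Suc j)
          have e: "-2 - int m - int k + 1 = -2 - int m - int (k - 1)" using Suc by simp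
          show ?thesis by (simp only: e)
        qed simp
        finally have Y: "y k (-2 - int m - int k) = ((if k = 0 then 0 else x2 (k - 1) (-2 - int m - int (k - 1))) - l1 * x2 k (-2 - int m - int k))
            - (x1 k (-2 - int (Suc m) - int k) - l2 * x1 k (-2 - int m - int k))" .
        have alg: "\<And>a b X c. l1 ^ k * ((X - l1 * b) - (a - l2 * c)) = (l1 ^ k * X - l1 * (l1 ^ k * b)) - (l1 ^ k * a - l2 * (l1 ^ k * c))"
          by (simp add: algebra_simps)
        show ?thesis unfolding Y by (rule alg)
      qed
      have lhs: "(\<lambda>k. l1 ^ k * y k (-2 - int m - int k)) sums (- (l2 ^ Suc m / of_nat (Suc m)))"
      proof -
        have "(\<lambda>k. l1 ^ k * y k (-2 - int m - int k)) = (\<lambda>k. if k = 0 then - (l2 ^ Suc m / of_nat (Suc m)) else 0)"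
          by (auto simp: fun_eq_iff y_def)
        thus ?thesis using sums_single[of 0 "\<lambda>_. - (l2 ^ Suc m / of_nat (Suc m))"] by simp
      qed
      have s1: "summable (\<lambda>k. l1 ^ k * (if k = 0 then 0 else x2 (k - 1) (-2 - int m - int (k - 1))))"
        by (rule suminf_shift_if(1)[OF sd])
      have e1: "(\<Sum>k. l1 ^ k * (if k = 0 then 0 else x2 (k - 1) (-2 - int m - int (k - 1)))) = l1 * d m"
        unfolding d_def by (rule suminf_shift_if(2)[OF sd])
      have "(\<lambda>k. (l1 ^ k * (if k = 0 then 0 else x2 (k - 1) (-2 - int m - int (k - 1))) - l1 * (l1 ^ k * x2 k (-2 - int m - int k)))
         - (l1 ^ k * x1 k (-2 - int (Suc m) - int k) - l2 * (l1 ^ k * x1 k (-2 - int m - int k))))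
         sums ((l1 * d m - l1 * d m) - (c (Suc m) - l2 * c m))"
      proof -
        have s1s: "(\<lambda>k. l1 ^ k * (if k = 0 then 0 else x2 (k - 1) (-2 - int m - int (k - 1)))) sums (l1 * d m)"
          using summable_sums[OF s1] e1 by simp
        show ?thesis unfolding c_def d_def
          by (intro sums_diff sums_mult summable_sums sc sd s1s[unfolded d_def])
      qed
      hence "(\<lambda>k. l1 ^ k * y k (-2 - int m - int k)) sums (- (c (Suc m) - l2 * c m))" using pt by simp
      hence "- (c (Suc m) - l2 * c m) = - (l2 ^ Suc m / of_nat (Suc m))" using lhs sums_unique2 by metis
      thus ?thesis by (metis minus_equation_iff minus_minus)
    qed
    show False by (rule harmonic_contra[OF l2 rec cb])
  qed
  with yH show ?thesis unfolding koszul_breaks_at_def by auto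
qed

lemma powi_pred: fixes x y :: complex assumes "x * y = 1" shows "x powi (a - 1) = y * x powi a"
proof -
  have x0: "x \<noteq> 0" using assms by auto
  have "x powi a = x powi (a - 1) * x" using power_int_minus_mult[of x a] x0 by simp
  hence "y * x powi a = x powi (a - 1) * (x * y)" by (simp add: algebra_simps)
  thus ?thesis using assms by simp
qed

lemma bfp_rows:
  fixes x :: "nat \<times> int \<Rightarrow> complex"
  assumes bd: "\<And>k n. cmod (x (k, n)) \<le> c k" and sup: "\<And>k n. x (k, n) \<noteq> 0 \<Longrightarrow> n \<in> R k"
    and fin: "\<And>k. finite (R k)" and sm: "summable (\<lambda>k. real (card (R k)) * (c k)\<^sup>2)"
  shows "bfp x"
  unfolding bfp_def
proof (intro exI allI impI)
  fix F :: "(nat \<times> int) set" assume F: "finite F"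
  let ?K = "fst ` F"
  have c0: "0 \<le> c k" for k using bd[of k 0] norm_ge_zero order_trans by blast
  have fS: "finite (Sigma ?K R)" using F fin by auto
  have "(\<Sum>i\<in>F. (cmod (x i))\<^sup>2) = (\<Sum>i\<in>F \<inter> Sigma ?K R. (cmod (x i))\<^sup>2)"
  proof (rule sum.mono_neutral_right)
    show "\<forall>i\<in>F - F \<inter> Sigma ?K R. (cmod (x i))\<^sup>2 = 0"
    proof
      fix i assume i: "i \<in> F - F \<inter> Sigma ?K R"
      obtain k n where kn: "i = (k, n)" by (cases i)
      have "k \<in> ?K" using i kn by force
      hence "n \<notin> R k" using i kn by auto
      thus "(cmod (x i))\<^sup>2 = 0" using sup[of k n] kn by auto
    qed
  qed (use F in auto)
  also have "\<dots> \<le> (\<Sum>i\<in>Sigma ?K R. (cmod (x i))\<^sup>2)"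
    by (rule sum_mono2) (use fS in auto)
  also have "\<dots> = (\<Sum>(k, n)\<in>Sigma ?K R. (cmod (x (k, n)))\<^sup>2)" by (simp add: case_prod_beta)
  also have "\<dots> = (\<Sum>k\<in>?K. \<Sum>n\<in>R k. (cmod (x (k, n)))\<^sup>2)"
    by (rule sum.Sigma[symmetric]) (use F fin in auto)
  also have "\<dots> \<le> (\<Sum>k\<in>?K. \<Sum>n\<in>R k. (c k)\<^sup>2)"
    by (intro sum_mono power_mono bd) auto
  also have "\<dots> = (\<Sum>k\<in>?K. real (card (R k)) * (c k)\<^sup>2)" by simp
  also have "\<dots> \<le> (\<Sum>k. real (card (R k)) * (c k)\<^sup>2)"
    by (rule sum_le_suminf[OF sm]) (use F in auto)
  finally show "(\<Sum>i\<in>F. (cmod (x i))\<^sup>2) \<le> (\<Sum>k. real (card (R k)) * (c k)\<^sup>2)" .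
qed

lemma kernel_trivial:
  assumes l1: "l1 \<noteq> 0" and l2: "l2 \<noteq> 0"
    and e1: "op_minus_scalar M_psi1 l1 g = 0" and e2: "op_minus_scalar M_psi2 l2 g = 0"
  shows "g = 0"
proof -
  have E1: "M_psi1 g k n = l1 * g k n" for k n
    using fun_cong[OF fun_cong[OF e1, of k], of n] by (simp add: op_minus_scalar_def)
  have E2: "M_psi2 g k n = l2 * g k n" for k n
    using fun_cong[OF fun_cong[OF e2, of k], of n] by (simp add: op_minus_scalar_def)
  have "\<forall>n. g k n = 0" for k
  proof (induction k)
    case 0
    have a: "g 0 n = 0" if "n \<le> -2" for n using E1[of 0 n] that l1 by (simp add: M1_eq)
    have b: "g 0 n = 0" if "0 \<le> n" for n using E2[of 0 n] that l2 by (simp add: M2_eq)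
    have c: "g 0 (-1) = 0" using E1[of 0 "-1"] b[of 0] l1 by (simp add: M1_eq)
    show ?case
    proof
      fix n :: int
      have "n \<le> -2 \<or> 0 \<le> n \<or> n = -1" by linarith
      thus "g 0 n = 0" using a b c by blast
    qed
  next
    case (Suc k)
    have a: "g (Suc k) n = 0" if "n \<le> -2" for n using E1[of "Suc k" n] that l1 Suc by (simp add: M1_eq)
    have b: "g (Suc k) n = 0" if "0 \<le> n" for n using E2[of "Suc k" n] that l2 Suc by (simp add: M2_eq)
    have c: "g (Suc k) (-1) = 0" using E1[of "Suc k" "-1"] b[of 0] l1 by (simp add: M1_eq)
    show ?case
    proof
      fix n :: int
      have "n \<le> -2 \<or> 0 \<le> n \<or> n = -1" by linarith
      thus "g (Suc k) n = 0" using a b c by blast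
    qed
  qed
  thus ?thesis by (auto simp: fun_eq_iff)
qed

definition gg :: "nat \<Rightarrow> real" where "gg k = 1 / real (Suc k)"
definition dd :: "nat \<Rightarrow> real" where "dd k = (if k = 0 then 0 else 1 / (real k * real (Suc k)))"
definition phi :: "nat \<times> int \<Rightarrow> complex" where
  "phi = (\<lambda>(k, n). if - int k - 1 \<le> n \<and> n \<le> int k - 1 then complex_of_real (gg k) else 0)"
definition phio :: "(nat \<times> int) option \<Rightarrow> complex" where
  "phio = case_option 0 phi"

lemma gg_diff: "1 \<le> k \<Longrightarrow> gg (k - 1) - gg k = dd k"
  by (cases k) (auto simp: gg_def dd_def field_simps)

lemma dd_nonneg: "0 \<le> dd k" by (simp add: dd_def)
lemma gg_nonneg: "0 \<le> gg k" by (simp add: gg_def)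

lemma diff1: "phio (p1 (k, n)) - phi (k, n) =
   (if n = int k - 1 then - complex_of_real (gg k) else if - int k - 1 \<le> n \<and> n \<le> -2 \<and> 1 \<le> k then complex_of_real (dd k) else 0)"
proof (cases "-1 \<le> n")
  case True
  thus ?thesis by (auto simp: p1_def phio_def phi_def)
next
  case False
  show ?thesis
  proof (cases "k = 0")
    case True thus ?thesis using False by (auto simp: p1_def phio_def phi_def)
  next
    case k: False
    have e: "phio (p1 (k, n)) = phi (k - 1, n + 1)" using False k by (simp add: p1_def phio_def)
    have "phi (k - 1, n + 1) = (if - int k - 1 \<le> n then complex_of_real (gg (k - 1)) else 0)"
      using False k by (auto simp: phi_def of_nat_diff)
    moreover have "phi (k, n) = (if - int k - 1 \<le> n then complex_of_real (gg k) else 0)"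
      using False k by (auto simp: phi_def)
    moreover have "complex_of_real (gg (k - 1)) - complex_of_real (gg k) = complex_of_real (dd k)"
      using gg_diff[of k] k by (simp flip: of_real_diff)
    ultimately show ?thesis using e False k by auto
  qed
qed

lemma diff2: "phio (p2 (k, n)) - phi (k, n) =
   (if n = - int k - 1 then - complex_of_real (gg k) else if 0 \<le> n \<and> n \<le> int k - 1 then complex_of_real (dd k) else 0)"
proof (cases "n < 0")
  case True
  thus ?thesis by (auto simp: p2_def phio_def phi_def)
next
  case False
  show ?thesis
  proof (cases "k = 0")
    case True thus ?thesis using False by (auto simp: p2_def phio_def phi_def)
  next
    case k: False
    have e: "phio (p2 (k, n)) = phi (k - 1, n - 1)" using False k by (simp add: p2_def phio_def)
    have "phi (k - 1, n - 1) = (if n \<le> int k - 1 then complex_of_real (gg (k - 1)) else 0)"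
      using False k by (auto simp: phi_def of_nat_diff)
    moreover have "phi (k, n) = (if n \<le> int k - 1 then complex_of_real (gg k) else 0)"
      using False k by (auto simp: phi_def)
    moreover have "complex_of_real (gg (k - 1)) - complex_of_real (gg k) = complex_of_real (dd k)"
      using gg_diff[of k] k by (simp flip: of_real_diff)
    ultimately show ?thesis using e False k by auto
  qed
qed

lemma sg2: "summable (\<lambda>j::nat. (gg j)\<^sup>2)"
proof -
  have "summable (\<lambda>j::nat. inverse (real (Suc j) ^ 2))"
    using inverse_power_summable[of 2, where 'a=real] by (simp add: summable_Suc_iff[symmetric, where f="\<lambda>n. inverse (real n ^ 2)"])
  thus ?thesis by (simp add: gg_def power_one_over divide_inverse power_inverse)
qed

lemma sdd: "summable (\<lambda>k. real k * (dd k)\<^sup>2)"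
proof (rule summable_comparison_test'[OF sg2, of 0])
  fix k :: nat
  show "norm (real k * (dd k)\<^sup>2) \<le> (gg k)\<^sup>2"
  proof (cases "k = 0")
    case False
    have alg: "a * (1 / (a * b))\<^sup>2 = 1 / (a * b\<^sup>2)" if "0 < a" "0 < b" for a b :: real
      using that by (simp add: field_simps power2_eq_square)
    have "real k * (dd k)\<^sup>2 = 1 / (real k * (real (Suc k))\<^sup>2)"
      using False alg[of "real k" "real (Suc k)"] by (simp add: dd_def del: of_nat_Suc)
    also have "\<dots> \<le> 1 / (real (Suc k))\<^sup>2"
      using False by (intro divide_left_mono) (auto simp: field_simps)
    finally show ?thesis using False by (simp add: gg_def power_one_over dd_def)
  qed (simp add: dd_def)
qed

lemma bfp_split:
  fixes x :: "nat \<times> int \<Rightarrow> complex"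
  assumes "bfp (\<lambda>i. if P i then x i else 0)" "bfp (\<lambda>i. if P i then 0 else x i)"
  shows "bfp x"
  using bfp_lin[OF assms, of 1 1] by (simp add: if_distrib cong: if_cong)

definition alpha :: "nat \<times> int \<Rightarrow> int" where
  "alpha = (\<lambda>(k, n). if 0 \<le> n then int k - n else int k + 1)"
definition beta :: "nat \<times> int \<Rightarrow> int" where
  "beta = (\<lambda>(k, n). if 0 \<le> n then int k else int k + n + 1)"

lemma ab_p1: "p1 i = Some j \<Longrightarrow> alpha j = alpha i - 1 \<and> beta j = beta i"
  by (cases i) (auto simp: p1_def alpha_def beta_def of_nat_diff split: if_splits)
lemma ab_p2: "p2 i = Some j \<Longrightarrow> alpha j = alpha i \<and> beta j = beta i - 1"
  by (cases i) (auto simp: p2_def alpha_def beta_def of_nat_diff split: if_splits)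

lemma torus_break:
  assumes l1: "cmod l1 = 1" and l2: "cmod l2 = 1"
  shows "koszul_breaks_at H2D_l2Z (op_minus_scalar M_psi1 l1) (op_minus_scalar M_psi2 l2) 2"
proof -
  define m1 where "m1 = cnj l1"
  define m2 where "m2 = cnj l2"
  have lm1: "m1 * l1 = 1" using l1 by (simp add: m1_def mult.commute complex_norm_square[symmetric])
  have lm2: "m2 * l2 = 1" using l2 by (simp add: m2_def mult.commute complex_norm_square[symmetric])
  have nm1: "cmod m1 = 1" using l1 by (simp add: m1_def)
  have nm2: "cmod m2 = 1" using l2 by (simp add: m2_def)
  define ph where "ph i = m1 powi alpha i * m2 powi beta i" for i
  have nph: "cmod (ph i) = 1" for i by (simp add: ph_def norm_mult norm_power_int nm1 nm2)
  have ph1: "p1 i = Some j \<Longrightarrow> ph j = l1 * ph i" for i j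
    using ab_p1[of i j] powi_pred[OF lm1, of "alpha i"] by (simp add: ph_def)
  have ph2: "p2 i = Some j \<Longrightarrow> ph j = l2 * ph i" for i j
    using ab_p2[of i j] powi_pred[OF lm2, of "beta i"] by (simp add: ph_def mult.left_commute)
  define h where "h = cur (\<lambda>i. ph i * phi i)"
  have uh: "unc h = (\<lambda>i. ph i * phi i)" by (simp add: h_def)
  define x1 where "x1 = op_minus_scalar M_psi1 l1 h"
  define x2 where "x2 = op_minus_scalar M_psi2 l2 h"
  have ux1: "unc x1 i = l1 * ph i * (phio (p1 i) - phi i)" for i
    by (cases "p1 i") (auto simp: x1_def unc_oms unc_M1 uh Tp_def phio_def ph1 algebra_simps)
  have ux2: "unc x2 i = l2 * ph i * (phio (p2 i) - phi i)" for i
    by (cases "p2 i") (auto simp: x2_def unc_oms unc_M2 uh Tp_def phio_def ph2 algebra_simps)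
  have nx1: "cmod (unc x1 i) = cmod (phio (p1 i) - phi i)" for i
    by (simp add: ux1 norm_mult l1 nph)
  have nx2: "cmod (unc x2 i) = cmod (phio (p2 i) - phi i)" for i
    by (simp add: ux2 norm_mult l2 nph)
  have x1H: "x1 \<in> H2D_l2Z" unfolding H_iff_bfp
  proof (rule bfp_split[where P="\<lambda>i. snd i = int (fst i) - 1"])
    show "bfp (\<lambda>i. if snd i = int (fst i) - 1 then unc x1 i else 0)"
    proof (rule bfp_rows[where c=gg and R="\<lambda>k. {int k - 1}"])
      fix k n show "cmod (if snd (k, n) = int (fst (k, n)) - 1 then unc x1 (k, n) else 0) \<le> gg k"
        using nx1[of "(k, n)"] diff1[of k n] by (auto simp: gg_nonneg)
    next
      show "summable (\<lambda>k. real (card {int k - 1}) * (gg k)\<^sup>2)" using sg2 by simp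
    qed (simp_all split: if_splits)
    show "bfp (\<lambda>i. if snd i = int (fst i) - 1 then 0 else unc x1 i)"
    proof (rule bfp_rows[where c=dd and R="\<lambda>k. {- int k - 1 .. -2}"])
      fix k n show "cmod (if snd (k, n) = int (fst (k, n)) - 1 then 0 else unc x1 (k, n)) \<le> dd k"
        using nx1[of "(k, n)"] diff1[of k n] by (auto simp: dd_nonneg)
    next
      fix k n assume "(if snd (k, n) = int (fst (k, n)) - 1 then 0 else unc x1 (k, n)) \<noteq> 0"
      thus "n \<in> {- int k - 1 .. -2}" using nx1[of "(k, n)"] diff1[of k n] by (auto split: if_splits)
    next
      have "card {- int k - 1 .. -2} = k" for k by simp
      thus "summable (\<lambda>k. real (card {- int k - 1 .. -2}) * (dd k)\<^sup>2)" using sdd by simp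
    qed (simp_all split: if_splits)
  qed
  have x2H: "x2 \<in> H2D_l2Z" unfolding H_iff_bfp
  proof (rule bfp_split[where P="\<lambda>i. snd i = - int (fst i) - 1"])
    show "bfp (\<lambda>i. if snd i = - int (fst i) - 1 then unc x2 i else 0)"
    proof (rule bfp_rows[where c=gg and R="\<lambda>k. {- int k - 1}"])
      fix k n show "cmod (if snd (k, n) = - int (fst (k, n)) - 1 then unc x2 (k, n) else 0) \<le> gg k"
        using nx2[of "(k, n)"] diff2[of k n] by (auto simp: gg_nonneg)
    next
      show "summable (\<lambda>k. real (card {- int k - 1}) * (gg k)\<^sup>2)" using sg2 by simp
    qed (simp_all split: if_splits)
    show "bfp (\<lambda>i. if snd i = - int (fst i) - 1 then 0 else unc x2 i)"
    proof (rule bfp_rows[where c=dd and R="\<lambda>k. {0 .. int k - 1}"])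
      fix k n show "cmod (if snd (k, n) = - int (fst (k, n)) - 1 then 0 else unc x2 (k, n)) \<le> dd k"
        using nx2[of "(k, n)"] diff2[of k n] by (auto simp: dd_nonneg)
    next
      fix k n assume "(if snd (k, n) = - int (fst (k, n)) - 1 then 0 else unc x2 (k, n)) \<noteq> 0"
      thus "n \<in> {0 .. int k - 1}" using nx2[of "(k, n)"] diff2[of k n] by (auto split: if_splits)
    next
      have "card {0 .. int k - 1} = k" for k by simp
      thus "summable (\<lambda>k. real (card {0 .. int k - 1}) * (dd k)\<^sup>2)" using sdd by simp
    qed (simp_all split: if_splits)
  qed
  have hnot: "h \<notin> H2D_l2Z"
  proof
    assume "h \<in> H2D_l2Z"
    then obtain B where B: "\<And>F. finite F \<Longrightarrow> (\<Sum>i\<in>F. (cmod (unc h i))\<^sup>2) \<le> B"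
      unfolding H_iff_bfp bfp_def by blast
    have hv: "cmod (unc h (k, n)) = gg k" if "n \<in> {- int k - 1 .. int k - 1}" for k n
      using that by (simp add: uh norm_mult nph phi_def gg_nonneg)
    have "harm K \<le> B" for K
    proof -
      let ?F = "Sigma {..<K} (\<lambda>k. {- int k - 1 .. int k - 1})"
      have "(\<Sum>i\<in>?F. (cmod (unc h i))\<^sup>2) = (\<Sum>k<K. \<Sum>n\<in>{- int k - 1 .. int k - 1}. (cmod (unc h (k, n)))\<^sup>2)"
        by (subst sum.Sigma) (auto simp: case_prod_beta)
      also have "\<dots> = (\<Sum>k<K. real (2 * k + 1) * (gg k)\<^sup>2)"
      proof (rule sum.cong[OF refl])
        fix k assume "k \<in> {..<K}"
        have "card {- int k - 1 .. int k - 1} = 2 * k + 1" by simp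
        thus "(\<Sum>n\<in>{- int k - 1 .. int k - 1}. (cmod (unc h (k, n)))\<^sup>2) = real (2 * k + 1) * (gg k)\<^sup>2"
          using hv[of _ k] by simp
      qed
      also have "\<dots> \<ge> (\<Sum>k<K. inverse (real (Suc k)))"
      proof (rule sum_mono)
        fix k
        have "inverse (real (Suc k)) = real (Suc k) * (gg k)\<^sup>2"
          by (simp add: gg_def power2_eq_square field_simps del: of_nat_Suc)
        also have "\<dots> \<le> real (2 * k + 1) * (gg k)\<^sup>2" by (intro mult_right_mono) auto
        finally show "inverse (real (Suc k)) \<le> real (2 * k + 1) * (gg k)\<^sup>2" .
      qed
      finally have "(\<Sum>k<K. inverse (real (Suc k))) \<le> (\<Sum>i\<in>?F. (cmod (unc h i))\<^sup>2)" .
      also have "\<dots> \<le> B" by (rule B) auto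
      finally show ?thesis by (simp add: harm_altdef)
    qed
    obtain n :: nat where n: "exp B < real n" using reals_Archimedean2 by blast
    have "B = ln (exp B)" by simp
    also have "\<dots> < ln (real n + 1)" using n by (subst ln_less_cancel_iff) auto
    also have "\<dots> \<le> harm n" by (rule ln_le_harm)
    finally show False using \<open>\<And>K. harm K \<le> B\<close>[of n] by simp
  qed
  have ker: "(x1, x2) \<in> {(h1, h2). h1 \<in> H2D_l2Z \<and> h2 \<in> H2D_l2Z \<and>
      op_minus_scalar M_psi1 l1 h2 - op_minus_scalar M_psi2 l2 h1 = 0}"
    using x1H x2H by (simp add: x1_def x2_def oms_comm)
  have nr: "(x1, x2) \<notin> (\<lambda>h. (op_minus_scalar M_psi1 l1 h, op_minus_scalar M_psi2 l2 h)) ` H2D_l2Z"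
  proof
    assume "(x1, x2) \<in> (\<lambda>h. (op_minus_scalar M_psi1 l1 h, op_minus_scalar M_psi2 l2 h)) ` H2D_l2Z"
    then obtain h' where h': "h' \<in> H2D_l2Z" "x1 = op_minus_scalar M_psi1 l1 h'" "x2 = op_minus_scalar M_psi2 l2 h'" by auto
    have a1: "op_minus_scalar M_psi1 l1 h = op_minus_scalar M_psi1 l1 h'" using h'(2) unfolding x1_def .
    have a2: "op_minus_scalar M_psi2 l2 h = op_minus_scalar M_psi2 l2 h'" using h'(3) unfolding x2_def .
    have "op_minus_scalar M_psi1 l1 (h - h') = op_minus_scalar M_psi1 l1 h - op_minus_scalar M_psi1 l1 h'" by (rule oms_diff)
    also have "\<dots> = 0" by (simp only: a1 diff_self)
    finally have z1: "op_minus_scalar M_psi1 l1 (h - h') = 0" .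
    have "op_minus_scalar M_psi2 l2 (h - h') = op_minus_scalar M_psi2 l2 h - op_minus_scalar M_psi2 l2 h'" by (rule oms_diff2)
    also have "\<dots> = 0" by (simp only: a2 diff_self)
    finally have z2: "op_minus_scalar M_psi2 l2 (h - h') = 0" .
    have l10: "l1 \<noteq> 0" and l20: "l2 \<noteq> 0" using l1 l2 by auto
    have "h - h' = 0" by (rule kernel_trivial[OF l10 l20 z1 z2])
    hence "h = h'" by simp
    thus False using hnot h' by simp
  qed
  show ?thesis unfolding koszul_breaks_at_def using ker nr by auto
qed

lemma spectrum_eq: "taylor_spectrum H2D_l2Z M_psi1 M_psi2 = {(z1, z2). cmod z1 \<le> 1 \<and> cmod z2 \<le> 1}"
proof (intro equalityI subsetI)
  fix z assume z: "z \<in> taylor_spectrum H2D_l2Z M_psi1 M_psi2"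
  obtain l1 l2 where zz: "z = (l1, l2)" by (cases z)
  from z zz obtain n where "koszul_breaks_at H2D_l2Z (op_minus_scalar M_psi1 l1) (op_minus_scalar M_psi2 l2) n"
    unfolding taylor_spectrum_def by auto
  hence "\<not> (1 < cmod l1 \<or> 1 < cmod l2)" using outside_exact by blast
  thus "z \<in> {(z1, z2). cmod z1 \<le> 1 \<and> cmod z2 \<le> 1}" using zz by auto
next
  fix z assume z: "z \<in> {(z1, z2). cmod z1 \<le> 1 \<and> cmod z2 \<le> 1}"
  obtain l1 l2 where zz: "z = (l1, l2)" by (cases z)
  have l1: "cmod l1 \<le> 1" and l2: "cmod l2 \<le> 1" using z zz by auto
  have "\<exists>n\<in>{1, 2, 3}. koszul_breaks_at H2D_l2Z (op_minus_scalar M_psi1 l1) (op_minus_scalar M_psi2 l2) n"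
  proof (cases "cmod l1 < 1")
    case a: True
    show ?thesis
    proof (cases "cmod l2 < 1")
      case True thus ?thesis using interior_break[OF a] by blast
    next
      case False hence "cmod l2 = 1" using l2 by simp
      thus ?thesis using boundary_B[OF a] by blast
    qed
  next
    case False hence a: "cmod l1 = 1" using l1 by simp
    show ?thesis
    proof (cases "cmod l2 < 1")
      case True thus ?thesis using boundary_A[OF a] by blast
    next
      case False hence "cmod l2 = 1" using l2 by simp
      thus ?thesis using torus_break[OF a] by blast
    qed
  qed
  thus "z \<in> taylor_spectrum H2D_l2Z M_psi1 M_psi2" using zz unfolding taylor_spectrum_def by auto
qed

definition Wop :: "(nat \<Rightarrow> int \<Rightarrow> complex) \<Rightarrow> nat \<times> nat \<Rightarrow> complex" where
  "Wop a = (\<lambda>(p, q). a (min p q) (int p - int q))"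
definition Winv :: "(nat \<times> nat \<Rightarrow> complex) \<Rightarrow> nat \<Rightarrow> int \<Rightarrow> complex" where
  "Winv b = (\<lambda>k n. b (k + nat n, k + nat (- n)))"
definition psi :: "nat \<times> nat \<Rightarrow> nat \<times> int" where
  "psi = (\<lambda>(p, q). (min p q, int p - int q))"
definition psinv :: "nat \<times> int \<Rightarrow> nat \<times> nat" where
  "psinv = (\<lambda>(k, n). (k + nat n, k + nat (- n)))"

lemma psi_bij: "bij_betw psi UNIV UNIV"
  by (rule bij_betw_byWitness[where f'=psinv]) (auto simp: psi_def psinv_def)

lemma Wop_unc: "Wop a = (\<lambda>m. unc a (psi m))"
  by (auto simp: Wop_def unc_def psi_def fun_eq_iff)

lemma Winv_Wop: "Winv (Wop a) = a"
  by (auto simp: Winv_def Wop_def fun_eq_iff)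
lemma pair_aux: "(min p q + nat (int p - int q), min p q + nat (int q - int p)) = (p, q)"
  by (cases "p \<le> q") (auto simp: min_def)

lemma Wop_Winv: "Wop (Winv b) = b"
  by (auto simp: Winv_def Wop_def fun_eq_iff pair_aux)

lemma Wop_H: "a \<in> H2D_l2Z \<Longrightarrow> Wop a \<in> H2D2"
proof -
  assume "a \<in> H2D_l2Z"
  hence "(\<lambda>i. (cmod (unc a i))\<^sup>2) summable_on UNIV" by (simp add: H_iff_bfp bfp_iff_summable)
  hence "(\<lambda>m. (cmod (unc a (psi m)))\<^sup>2) summable_on UNIV"
    using summable_on_reindex_bij_betw[OF psi_bij, of "\<lambda>i. (cmod (unc a i))\<^sup>2"] by simp
  thus ?thesis by (simp add: H2D2_def Wop_unc)
qed

lemma Winv_H: "b \<in> H2D2 \<Longrightarrow> Winv b \<in> H2D_l2Z"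
proof -
  assume b: "b \<in> H2D2"
  have e: "(\<lambda>m. unc (Winv b) (psi m)) = b" using Wop_Winv[of b] by (simp add: Wop_unc)
  have "(\<lambda>m. (cmod (unc (Winv b) (psi m)))\<^sup>2) summable_on UNIV" using b fun_cong[OF e] by (simp add: H2D2_def)
  hence "(\<lambda>i. (cmod (unc (Winv b) i))\<^sup>2) summable_on UNIV"
    using summable_on_reindex_bij_betw[OF psi_bij, of "\<lambda>i. (cmod (unc (Winv b) i))\<^sup>2"] by simp
  thus ?thesis by (simp add: H_iff_bfp bfp_iff_summable)
qed

lemma Wop_norm: "a \<in> H2D_l2Z \<Longrightarrow> H2D2_norm (Wop a) = H2D_norm a"
proof -
  assume a: "a \<in> H2D_l2Z"
  hence s: "(\<lambda>i. (cmod (unc a i))\<^sup>2) summable_on UNIV" by (simp add: H_iff_bfp bfp_iff_summable)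
  have "(\<Sum>\<^sub>\<infinity>m. (cmod (Wop a m))\<^sup>2) = (\<Sum>\<^sub>\<infinity>i. (cmod (unc a i))\<^sup>2)"
    unfolding Wop_unc by (rule infsum_reindex_bij_betw[OF psi_bij])
  also have "\<dots> = (\<Sum>\<^sub>\<infinity>k. \<Sum>\<^sub>\<infinity>n. (cmod (unc a (k, n)))\<^sup>2)"
    using infsum_Sigma_banach[of "\<lambda>i. (cmod (unc a i))\<^sup>2" UNIV "\<lambda>_. UNIV"] s by simp
  also have "\<dots> = (\<Sum>\<^sub>\<infinity>k. (l2Z_norm (a k))\<^sup>2)"
    by (simp add: l2Z_norm_def infsum_nonneg unc_def)
  finally show ?thesis by (simp add: H2D2_norm_def H2D_norm_def)
qed

definition Uinv :: "nat \<times> nat \<Rightarrow> nat \<times> nat" where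
  "Uinv = (\<lambda>(a, b). if b + 2 \<le> a then (a - 2, b) else if a = b + 1 then (a - 1, a) else (a, b + 2))"

lemma U_idx_iff: "U_idx m = n \<longleftrightarrow> m = Uinv n"
  by (cases m; cases n) (auto simp: U_idx_def Uinv_def split: if_splits)

lemma U_op_eq: "U_op f n = f (Uinv n)"
proof -
  have "{m. U_idx m = n} = {Uinv n}" using U_idx_iff by auto
  thus ?thesis by (simp add: U_op_def)
qed

lemma W_tau1: "Wop (M_psi1 a) = tau1 (Wop a)"
proof (rule ext)
  fix m :: "nat \<times> nat"
  obtain p q where m: "m = (p, q)" by (cases m)
  show "Wop (M_psi1 a) m = tau1 (Wop a) m"
    unfolding m by (auto simp: Wop_def tau1_def U_adj_def M_z1_def U_idx_def M1_eq min_def) (intro arg_cong2[where f=a]; arith)+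
qed

lemma W_tau2: "Wop (M_psi2 a) = tau2 (Wop a)"
proof (rule ext)
  fix m :: "nat \<times> nat"
  obtain p q where m: "m = (p, q)" by (cases m)
  show "Wop (M_psi2 a) m = tau2 (Wop a) m"
    unfolding m by (auto simp: Wop_def tau2_def U_op_eq M_z2_def Uinv_def M2_eq min_def) (intro arg_cong2[where f=a]; arith)+
qed

theorem lemma3p7:
  shows "jointly_unitarily_equivalent M_psi1 M_psi2 tau1 tau2
    \<and> taylor_spectrum H2D_l2Z M_psi1 M_psi2 = {(z1, z2). cmod z1 \<le> 1 \<and> cmod z2 \<le> 1}
    \<and> (\<forall>l1 l2. cmod l1 < 1 \<and> cmod l2 < 1 \<longrightarrow>
         koszul_breaks_at H2D_l2Z (op_minus_scalar M_psi1 l1) (op_minus_scalar M_psi2 l2) 2)"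
proof (intro conjI allI impI)
  show "jointly_unitarily_equivalent M_psi1 M_psi2 tau1 tau2"
    unfolding jointly_unitarily_equivalent_def
  proof (intro exI[of _ Wop] conjI ballI allI)
    show "bij_betw Wop H2D_l2Z H2D2"
      by (rule bij_betw_byWitness[where f'=Winv]) (auto simp: Winv_Wop Wop_Winv Wop_H Winv_H)
    fix a assume "a \<in> H2D_l2Z"
    thus "H2D2_norm (Wop a) = H2D_norm a" by (rule Wop_norm)
    show "Wop (M_psi1 a) = tau1 (Wop a)" by (rule W_tau1)
    show "Wop (M_psi2 a) = tau2 (Wop a)" by (rule W_tau2)
  next
    fix a b c d assume "a \<in> H2D_l2Z" "b \<in> H2D_l2Z"
    show "Wop (\<lambda>k n. c * a k n + d * b k n) = (\<lambda>m. c * Wop a m + d * Wop b m)"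
      by (auto simp: Wop_def fun_eq_iff)
  qed
  show "taylor_spectrum H2D_l2Z M_psi1 M_psi2 = {(z1, z2). cmod z1 \<le> 1 \<and> cmod z2 \<le> 1}"
    by (rule spectrum_eq)
next
  fix l1 l2 :: complex assume "cmod l1 < 1 \<and> cmod l2 < 1"
  thus "koszul_breaks_at H2D_l2Z (op_minus_scalar M_psi1 l1) (op_minus_scalar M_psi2 l2) 2"
    using interior_break by blast
qed


end
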